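(* Consider a chemical reaction network satisfying hypotheses (H1) and (H2) below, and let \[ Y+S_0\rightleftarrows U_1 \rightarrow Y+S_1\rightleftarrows U_2 \rightarrow \cdots \rightarrow Y+S_{L-1}\rightleftarrows U_L \rightarrow Y+S_L \] be one of its connected components ($L\ge 1$), with rate constants $a_j,b_j,c_j$ ($1\le j\le L$) as described in the context. Then all the constants $a_1,\dots,a_L,b_1,\dots,b_L,c_1,\dots,c_L$ of this component are identifiable from the single variable $s_L$ using the total derivatives $s_L^{(\ell)}$ with $1\le \ell\le \max\{2,2L-1\}$.
   Context: Species are denoted by capital letters and their concentrations by the corresponding lower-case letters. A chemical reaction network is a finite directed graph whose vertices (complexes) are nonnegative integer combinations of species (identified with vectors $y\in\mathbb{Z}_{\ge0}^s$) and whose edges $y\to y'$ (reactions) carry rate constants $k_{yy'}>0$; $\mathbf{k}$ denotes the vector of all rate constants. Under mass-action kinetics the concentrations $\mathbf{x}=(x_1,\dots,x_s)$ satisfy $\dot{\mathbf{x}}=\sum_{y\to y'}k_{yy'}\mathbf{x}^y(y'-y)$, with $\mathbf{x}^y=\prod_i x_i^{y_i}$. For a polynomial $\varphi(\mathbf{x})$, its total derivative is $\dot\varphi=\sum_i \frac{\partial\varphi}{\partial x_i}\dot x_i$, with $\dot x_i$ replaced by the right-hand side of the system; $\varphi^{(\ell)}$ is the $\ell$-th iterate ($\varphi^{(1)}=\dot\varphi$). Each $\varphi^{(\ell)}$ is a polynomial in the concentration variables with coefficients that are polynomials in $\mathbf{k}$. Identifiability: a map $\psi$ defined on $\mathbb{R}_{>0}^{\#\text{reactions}}$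 (e.g. a list of rate constants) is identifiable from variables $x_{i_1},\dots,x_{i_t}$ using derivatives of orders $1\le\ell\le D$ if for all $\mathbf{k}^*,\mathbf{k}^{**}\in\mathbb{R}_{>0}^{\#\text{reactions}}$, the equalities $x_{i_j}^{(\ell)}(\mathbf{x},\mathbf{k}^* )=x_{i_j}^{(\ell)}(\mathbf{x},\mathbf{k}^{**})$ as polynomials in $\mathbf{x}$ for all $1\le\ell\le D$, $1\le j\le t$ imply $\psi(\mathbf{k}^* )=\psi(\mathbf{k}^{**})$. Hypotheses. (H1) Every connected component of the network has the form $Y+S_0\rightleftarrows U_1\to Y+S_1\rightleftarrows\cdots\rightleftarrows U_L\to Y+S_L$, meaning the reactions $Y+S_{j-1}\to U_j$ (rate $a_j$), $U_j\to Y+S_{j-1}$ (rate $b_j$), $U_j\to Y+S_j$ (rate $c_j$), $1\le j\le L$; $Y$ is the unique enzyme of the component, the $U_j$ are intermediate species; intermediate species are all distinct throughout the whole network (each participates only in its three reactions); the non-intermediate species $S_0,\dots,S_L$ of a component are pairwise distinct but may appear (in any role, including as enzymes) in other components; each complex lies in a unique connected component. For an intermediate $U$, $\mathscr{S}_U$ denotes the set of substrates/products ($S_0,\dots,S_L$) of the component containing $U$. (H2) The set of species admits a partition $\mathscr{S}^{(0)}\sqcup\mathscr{S}^{(1)}\sqcup\cdots\sqcup\mathscr{S}^{(M)}$, $M\ge2$, into nonempty sets, where $\mathscr{S}^{(0)}$ is the set of intermediate species, such that for each intermediate $U$ whose component has enzyme $Y$ there is $\alpha\ge1$ with $\mathscr{S}_U\subseteq\mathscr{S}^{(\alpha)}$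 and $Y\notin\mathscr{S}^{(\alpha)}$. *)

theory Defs
  imports "HOL-Analysis.Analysis"
begin

text \<open>A reaction is a pair
  (source complex, target complex); a network is a finite set of reactions;
  rate constants are a function k on reactions (only values on the network matter).\<close>

type_synonym 'sp cplx = "'sp \<Rightarrow> nat"
type_synonym 'sp reaction = "'sp cplx \<times> 'sp cplx"

definition cunit :: "'sp \<Rightarrow> 'sp cplx" where
  "cunit A = (\<lambda>i. if i = A then 1 else 0)"

definition cplus :: "'sp cplx \<Rightarrow> 'sp cplx \<Rightarrow> 'sp cplx" where
  "cplus y z = (\<lambda>i. y i + z i)"

definition monom_x :: "'sp cplx \<Rightarrow> real ^ 'sp::finite \<Rightarrow> real" where
  "monom_x y x = (\<Prod>i\<in>UNIV. (x $ i) ^ (y i))"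

definition mass_action :: "('sp::finite) reaction set \<Rightarrow> ('sp reaction \<Rightarrow> real) \<Rightarrow> real ^ 'sp \<Rightarrow> real ^ 'sp" where
  "mass_action R k x = (\<Sum>r\<in>R. (k r * monom_x (fst r) x) *\<^sub>R (\<chi> i. real (snd r i) - real (fst r i)))"

definition pderiv_x :: "'sp::finite \<Rightarrow> (real ^ 'sp \<Rightarrow> real) \<Rightarrow> real ^ 'sp \<Rightarrow> real" where
  "pderiv_x i \<phi> x = deriv (\<lambda>t. \<phi> (x + t *\<^sub>R axis i 1)) 0"

definition total_deriv :: "('sp::finite) reaction set \<Rightarrow> ('sp reaction \<Rightarrow> real) \<Rightarrow> (real ^ 'sp \<Rightarrow> real) \<Rightarrow> real ^ 'sp \<Rightarrow> real" where
  "total_deriv R k \<phi> = (\<lambda>x. \<Sum>i\<in>UNIV. pderiv_x i \<phi> x * (mass_action R k x $ i))"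

definition total_deriv_iter :: "('sp::finite) reaction set \<Rightarrow> ('sp reaction \<Rightarrow> real) \<Rightarrow> nat \<Rightarrow> (real ^ 'sp \<Rightarrow> real) \<Rightarrow> real ^ 'sp \<Rightarrow> real" where
  "total_deriv_iter R k l \<phi> = (total_deriv R k ^^ l) \<phi>"

definition identifiable :: "('sp::finite) reaction set \<Rightarrow> (('sp reaction \<Rightarrow> real) \<Rightarrow> 'b) \<Rightarrow> 'sp set \<Rightarrow> nat \<Rightarrow> bool" where
  "identifiable R \<psi> obs D \<longleftrightarrow>
     (\<forall>k1 k2. (\<forall>r\<in>R. k1 r > 0) \<and> (\<forall>r\<in>R. k2 r > 0) \<and>
        (\<forall>l\<in>{1..D}. \<forall>i\<in>obs. total_deriv_iter R k1 l (\<lambda>x. x $ i) = total_deriv_iter R k2 l (\<lambda>x. x $ i))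
        \<longrightarrow> \<psi> k1 = \<psi> k2)"

text \<open>Reactions of a component Y+S_0 <=> U_1 -> Y+S_1 <=> ... <=> U_L -> Y+S_L.\<close>
definition rA :: "'sp \<Rightarrow> (nat \<Rightarrow> 'sp) \<Rightarrow> (nat \<Rightarrow> 'sp) \<Rightarrow> nat \<Rightarrow> 'sp reaction" where
  "rA Y S U j = (cplus (cunit Y) (cunit (S (j - 1))), cunit (U j))"
definition rB :: "'sp \<Rightarrow> (nat \<Rightarrow> 'sp) \<Rightarrow> (nat \<Rightarrow> 'sp) \<Rightarrow> nat \<Rightarrow> 'sp reaction" where
  "rB Y S U j = (cunit (U j), cplus (cunit Y) (cunit (S (j - 1))))"
definition rC :: "'sp \<Rightarrow> (nat \<Rightarrow> 'sp) \<Rightarrow> (nat \<Rightarrow> 'sp) \<Rightarrow> nat \<Rightarrow> 'sp reaction" where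
  "rC Y S U j = (cunit (U j), cplus (cunit Y) (cunit (S j)))"

definition chain_reactions :: "'sp \<Rightarrow> (nat \<Rightarrow> 'sp) \<Rightarrow> (nat \<Rightarrow> 'sp) \<Rightarrow> nat \<Rightarrow> 'sp reaction set" where
  "chain_reactions Y S U L = (\<Union>j\<in>{1..L}. {rA Y S U j, rB Y S U j, rC Y S U j})"

definition species_of :: "'sp reaction set \<Rightarrow> 'sp set" where
  "species_of R = {s. \<exists>r\<in>R. fst r s > 0 \<or> snd r s > 0}"

text \<open>Hypothesis (H1): the network R is the disjoint union of the components indexed by I,
  component c being Y c + S c 0 <=> U c 1 -> ... <=> U c (L c) -> Y c + S c (L c).\<close>
definition H1 :: "('sp::finite) reaction set \<Rightarrow> 'c set \<Rightarrow> ('c \<Rightarrow> nat) \<Rightarrow> ('c \<Rightarrow> 'sp) \<Rightarrow>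
    ('c \<Rightarrow> nat \<Rightarrow> 'sp) \<Rightarrow> ('c \<Rightarrow> nat \<Rightarrow> 'sp) \<Rightarrow> bool" where
  "H1 R I L Y S U \<longleftrightarrow>
     finite I \<and>
     (\<forall>c\<in>I. L c \<ge> 1) \<and>
     R = (\<Union>c\<in>I. chain_reactions (Y c) (S c) (U c) (L c)) \<and>
     \<comment> \<open>intermediate species are all distinct throughout the network\<close>
     inj_on (\<lambda>(c, j). U c j) {(c, j). c \<in> I \<and> j \<in> {1..L c}} \<and>
     \<comment> \<open>intermediates are not enzymes or substrates/products anywhere\<close>
     (\<forall>c\<in>I. \<forall>j\<in>{1..L c}. \<forall>c'\<in>I. U c j \<noteq> Y c' \<and> (\<forall>j'\<in>{0..L c'}. U c j \<noteq> S c' j')) \<and>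
     \<comment> \<open>substrates/products of a component are pairwise distinct\<close>
     (\<forall>c\<in>I. inj_on (S c) {0..L c}) \<and>
     \<comment> \<open>each complex lies in a unique connected component\<close>
     (\<forall>c\<in>I. \<forall>c'\<in>I. c \<noteq> c' \<longrightarrow> (\<forall>j\<in>{0..L c}. \<forall>j'\<in>{0..L c'}.
        cplus (cunit (Y c)) (cunit (S c j)) \<noteq> cplus (cunit (Y c')) (cunit (S c' j'))))"

text \<open>Hypothesis (H2): partition of the species into classes 0..M (M >= 2), class 0 being the
  intermediates, given by a class-index function P.\<close>
definition H2 :: "('sp::finite) reaction set \<Rightarrow> 'c set \<Rightarrow> ('c \<Rightarrow> nat) \<Rightarrow> ('c \<Rightarrow> 'sp) \<Rightarrow>
    ('c \<Rightarrow> nat \<Rightarrow> 'sp) \<Rightarrow> ('c \<Rightarrow> nat \<Rightarrow> 'sp) \<Rightarrow> bool" where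
  "H2 R I L Y S U \<longleftrightarrow>
     (\<exists>M::nat. \<exists>P :: 'sp \<Rightarrow> nat. M \<ge> 2 \<and>
        (\<forall>s\<in>species_of R. P s \<le> M) \<and>
        (\<forall>\<alpha>\<le>M. \<exists>s\<in>species_of R. P s = \<alpha>) \<and>
        (\<forall>s\<in>species_of R. P s = 0 \<longleftrightarrow> (\<exists>c\<in>I. \<exists>j\<in>{1..L c}. s = U c j)) \<and>
        (\<forall>c\<in>I. \<exists>\<alpha>\<ge>1. (\<forall>j\<in>{0..L c}. P (S c j) = \<alpha>) \<and> P (Y c) \<noteq> \<alpha>))"

end

theory Submission
  imports Defs
begin


definition msub :: "'sp cplx \<Rightarrow> 'sp \<Rightarrow> 'sp cplx" where
  "msub m i = m(i := m i - 1)"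

definition supp :: "('sp cplx \<Rightarrow> real) \<Rightarrow> 'sp cplx set" where
  "supp p = {m. p m \<noteq> 0}"

definition peval :: "('sp cplx \<Rightarrow> real) \<Rightarrow> real ^ 'sp::finite \<Rightarrow> real" where
  "peval p x = (\<Sum>m\<in>supp p. p m * monom_x m x)"

definition delta :: "'sp reaction \<Rightarrow> 'sp \<Rightarrow> real" where
  "delta r i = real (snd r i) - real (fst r i)"

definition TD :: "('sp::finite) reaction set \<Rightarrow> ('sp reaction \<Rightarrow> real) \<Rightarrow> ('sp cplx \<Rightarrow> real) \<Rightarrow> 'sp cplx \<Rightarrow> real" where
  "TD R k p = (\<lambda>m'. \<Sum>m\<in>supp p. \<Sum>i\<in>UNIV. \<Sum>r\<in>R.
      if 0 < m i \<and> m' = cplus (msub m i) (fst r) then p m * real (m i) * k r * delta r i else 0)"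

definition Xv :: "'sp \<Rightarrow> 'sp cplx \<Rightarrow> real" where
  "Xv i = (\<lambda>m. if m = cunit i then 1 else 0)"

definition pdf :: "'sp \<Rightarrow> ('sp cplx \<Rightarrow> real) \<Rightarrow> 'sp cplx \<Rightarrow> real" where
  "pdf i p = (\<lambda>m. real (m i + 1) * p (m(i := m i + 1)))"

lemma peval_superset:
  assumes "finite A" "supp p \<subseteq> A"
  shows "peval p x = (\<Sum>m\<in>A. p m * monom_x m x)"
  unfolding peval_def
  by (rule sum.mono_neutral_left) (use assms in \<open>auto simp: supp_def\<close>)

lemma monom_cplus: "monom_x (cplus a b) x = monom_x a x * monom_x b x"
  unfolding monom_x_def cplus_def by (simp add: power_add prod.distrib)

lemma monom_msub:
  assumes "0 < m i"
  shows "monom_x m x = x $ i * monom_x (msub m i) x"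
proof -
  have "monom_x m x = (x $ i) ^ m i * (\<Prod>j\<in>UNIV - {i}. (x $ j) ^ m j)"
    unfolding monom_x_def by (simp add: prod.remove[of UNIV i])
  moreover have "monom_x (msub m i) x = (x $ i) ^ (m i - 1) * (\<Prod>j\<in>UNIV - {i}. (x $ j) ^ m j)"
    unfolding monom_x_def msub_def
    by (simp add: prod.remove[of UNIV i])
  ultimately show ?thesis using assms
    by (metis (no_types, lifting) Suc_diff_1 mult.assoc power_Suc)
qed

lemma monom_cunit: "monom_x (cunit i) x = x $ i"
  unfolding monom_x_def cunit_def
  by (simp add: prod.remove power_0 if_distrib cong: if_cong) 

lemma deriv_monom:
  "((\<lambda>t. monom_x m (x + t *\<^sub>R axis i 1)) has_real_derivative real (m i) * monom_x (msub m i) x) (at 0)"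
proof -
  define C where "C = (\<Prod>j\<in>UNIV - {i}. (x $ j) ^ m j)"
  have eq: "monom_x m (x + t *\<^sub>R axis i 1) = (x $ i + t) ^ m i * C" for t
    unfolding monom_x_def C_def
    by (simp add: prod.remove[of UNIV i] axis_def)
  have ms: "monom_x (msub m i) x = (x $ i) ^ (m i - 1) * C"
    unfolding monom_x_def msub_def C_def
    by (simp add: prod.remove[of UNIV i])
  have "((\<lambda>t. (x $ i + t) ^ m i * C) has_real_derivative (real (m i) * (x $ i + 0) ^ (m i - 1) * 1) * C) (at 0)"
    by (intro derivative_eq_intros) auto
  then show ?thesis unfolding eq ms by (simp add: mult.assoc)
qed

lemma has_deriv_peval:
  assumes "finite (supp p)"
  shows "((\<lambda>t. peval p (x + t *\<^sub>R axis i 1)) has_real_derivative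
           (\<Sum>m\<in>supp p. p m * (real (m i) * monom_x (msub m i) x))) (at 0)"
  unfolding peval_def by (intro DERIV_sum DERIV_cmult deriv_monom)

lemma pderiv_peval:
  assumes "finite (supp p)"
  shows "pderiv_x i (peval p) x = (\<Sum>m\<in>supp p. p m * (real (m i) * monom_x (msub m i) x))"
  unfolding pderiv_x_def using has_deriv_peval[OF assms] by (rule DERIV_imp_deriv)

lemma mass_comp: "mass_action R k x $ i = (\<Sum>r\<in>R. k r * monom_x (fst r) x * delta r i)"
  unfolding mass_action_def sum_component delta_def by simp

lemma sum_nz: assumes "sum g A \<noteq> 0" obtains x where "x \<in> A" "g x \<noteq> 0"
  using assms by (rule sum.not_neutral_contains_not_neutral)

lemma supp_TD_sub:
  "supp (TD R k p) \<subseteq> (\<lambda>(m,i,r). cplus (msub m i) (fst r)) ` (supp p \<times> UNIV \<times> R)"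
proof
  fix m' assume "m' \<in> supp (TD R k p)"
  then have "TD R k p m' \<noteq> 0" by (simp add: supp_def)
  then obtain m where m: "m \<in> supp p" and h1: "(\<Sum>i\<in>UNIV. \<Sum>r\<in>R.
      if 0 < m i \<and> m' = cplus (msub m i) (fst r) then p m * real (m i) * k r * delta r i else 0) \<noteq> 0"
    unfolding TD_def by (rule sum_nz)
  from h1 obtain i where h2: "(\<Sum>r\<in>R.
      if 0 < m i \<and> m' = cplus (msub m i) (fst r) then p m * real (m i) * k r * delta r i else 0) \<noteq> 0"
    by (rule sum_nz)
  from h2 obtain r where "r \<in> R" "(if 0 < m i \<and> m' = cplus (msub m i) (fst r) then p m * real (m i) * k r * delta r i else 0) \<noteq> 0"
    by (rule sum_nz)
  then have "r \<in> R" "0 < m i \<and> m' = cplus (msub m i) (fst r)" by (simp_all split: if_splits)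
  with m show "m' \<in> (\<lambda>(m,i,r). cplus (msub m i) (fst r)) ` (supp p \<times> UNIV \<times> R)"
    by (intro image_eqI[where x="(m,i,r)"]) auto
qed

lemma fin_TD:
  assumes "finite R" "finite (supp p)"
  shows "finite (supp (TD R k p))"
  by (rule finite_subset[OF supp_TD_sub]) (intro finite_imageI finite_cartesian_product, use assms in auto)


lemma TD_sound:
  assumes R: "finite R" and p: "finite (supp p)"
  shows "total_deriv R k (peval p) = peval (TD R k p)"
proof
  fix x :: "real ^ 'a"
  define B where "B = (\<lambda>(m,i,r). cplus (msub m i) (fst r)) ` (supp p \<times> UNIV \<times> R)"
  have B: "finite B" unfolding B_def using R p by auto
  define v where "v m i r = p m * real (m i) * k r * delta r i" for m i r
  have "peval (TD R k p) x = (\<Sum>m'\<in>B. TD R k p m' * monom_x m' x)"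
    by (rule peval_superset[OF B]) (use supp_TD_sub in \<open>simp add: B_def\<close>)
  also have "\<dots> = (\<Sum>m'\<in>B. \<Sum>m\<in>supp p. \<Sum>i\<in>UNIV. \<Sum>r\<in>R.
      if 0 < m i \<and> m' = cplus (msub m i) (fst r) then v m i r * monom_x m' x else 0)"
    unfolding TD_def v_def sum_distrib_right by (intro sum.cong refl) simp
  also have "\<dots> = (\<Sum>m\<in>supp p. \<Sum>i\<in>UNIV. \<Sum>r\<in>R. \<Sum>m'\<in>B.
      if 0 < m i \<and> m' = cplus (msub m i) (fst r) then v m i r * monom_x m' x else 0)"
    by (subst sum.swap, rule sum.cong, rule refl, subst sum.swap, rule sum.cong, rule refl,
        subst sum.swap, rule refl)
  also have "\<dots> = (\<Sum>m\<in>supp p. \<Sum>i\<in>UNIV. \<Sum>r\<in>R.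
      if 0 < m i then v m i r * monom_x (cplus (msub m i) (fst r)) x else 0)"
  proof (intro sum.cong refl)
    fix m i r assume "m \<in> supp p" "r \<in> R"
    then have "cplus (msub m i) (fst r) \<in> B" unfolding B_def by force
    then show "(\<Sum>m'\<in>B. if 0 < m i \<and> m' = cplus (msub m i) (fst r) then v m i r * monom_x m' x else 0) =
      (if 0 < m i then v m i r * monom_x (cplus (msub m i) (fst r)) x else 0)"
      using B by (cases "0 < m i") (simp_all add: sum.delta)
  qed
  also have "\<dots> = (\<Sum>m\<in>supp p. \<Sum>i\<in>UNIV. \<Sum>r\<in>R.
      p m * (real (m i) * monom_x (msub m i) x) * (k r * monom_x (fst r) x * delta r i))"
    by (intro sum.cong refl) (auto simp: v_def monom_cplus)
  also have "\<dots> = (\<Sum>i\<in>UNIV. \<Sum>m\<in>supp p.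
      p m * (real (m i) * monom_x (msub m i) x) * (\<Sum>r\<in>R. k r * monom_x (fst r) x * delta r i))"
    by (subst sum.swap) (simp add: sum_distrib_left)
  also have "\<dots> = total_deriv R k (peval p) x"
    unfolding total_deriv_def mass_comp pderiv_peval[OF p] by (simp add: sum_distrib_right)
  finally show "total_deriv R k (peval p) x = peval (TD R k p) x" by simp
qed


lemma supp_pdf_sub: "supp (pdf i p) \<subseteq> (\<lambda>m. msub m i) ` {m \<in> supp p. 0 < m i}"
proof
  fix m assume "m \<in> supp (pdf i p)"
  then have "p (m(i := m i + 1)) \<noteq> 0" by (simp add: supp_def pdf_def)
  moreover have "msub (m(i := m i + 1)) i = m" by (simp add: msub_def)
  ultimately show "m \<in> (\<lambda>m. msub m i) ` {m \<in> supp p. 0 < m i}"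
    by (intro image_eqI[where x="m(i := m i + 1)"]) (auto simp: supp_def)
qed

lemma fin_pdf: "finite (supp p) \<Longrightarrow> finite (supp (pdf i p))"
  by (rule finite_subset[OF supp_pdf_sub]) auto

lemma pderiv_peval_pdf:
  assumes p: "finite (supp p)"
  shows "pderiv_x i (peval p) = peval (pdf i p)"
proof
  fix x :: "real ^ 'a"
  have inj: "inj_on (\<lambda>m. msub m i) {m \<in> supp p. 0 < m i}"
  proof (rule inj_onI)
    fix a b assume a: "a \<in> {m \<in> supp p. 0 < m i}" and b: "b \<in> {m \<in> supp p. 0 < m i}"
      and e: "msub a i = msub b i"
    show "a = b"
    proof
      fix j show "a j = b j"
        using fun_cong[OF e, of j] a b by (cases "j = i") (auto simp: msub_def)
    qed
  qed
  have "peval (pdf i p) x = (\<Sum>m\<in>(\<lambda>m. msub m i) ` {m \<in> supp p. 0 < m i}. pdf i p m * monom_x m x)"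
    by (rule peval_superset[OF _ supp_pdf_sub]) (use p in auto)
  also have "\<dots> = (\<Sum>m\<in>{m \<in> supp p. 0 < m i}. pdf i p (msub m i) * monom_x (msub m i) x)"
    by (subst sum.reindex[OF inj]) simp
  also have "\<dots> = (\<Sum>m\<in>{m \<in> supp p. 0 < m i}. p m * (real (m i) * monom_x (msub m i) x))"
  proof (intro sum.cong refl)
    fix m assume "m \<in> {m \<in> supp p. 0 < m i}"
    then have "(msub m i)(i := msub m i i + 1) = m" "msub m i i + 1 = m i"
      by (auto simp: msub_def)
    then show "pdf i p (msub m i) * monom_x (msub m i) x = p m * (real (m i) * monom_x (msub m i) x)"
      unfolding pdf_def by simp
  qed
  also have "\<dots> = (\<Sum>m\<in>supp p. p m * (real (m i) * monom_x (msub m i) x))"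
    by (rule sum.mono_neutral_left) (use p in auto)
  also have "\<dots> = pderiv_x i (peval p) x" by (rule pderiv_peval[OF p, symmetric])
  finally show "pderiv_x i (peval p) x = peval (pdf i p) x" by simp
qed

lemma pow_pderiv:
  "finite (supp p) \<Longrightarrow> (pderiv_x i ^^ n) (peval p) = peval ((pdf i ^^ n) p) \<and> finite (supp ((pdf i ^^ n) p))"
  by (induction n) (auto simp: pderiv_peval_pdf fin_pdf)

definition cf :: "nat \<Rightarrow> nat \<Rightarrow> real" where
  "cf n a = (\<Prod>k<n. real (a + k + 1))"

lemma cf_pos: "cf n a > 0"
  unfolding cf_def by (intro prod_pos) auto

lemma pow_pdf: "(pdf i ^^ n) p m = cf n (m i) * p (m(i := m i + n))"
proof (induction n arbitrary: m)
  case 0 then show ?case by (simp add: cf_def)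
next
  case (Suc n)
  have "(pdf i ^^ Suc n) p m = real (m i + 1) * ((pdf i ^^ n) p) (m(i := m i + 1))"
    by (simp add: pdf_def)
  also have "\<dots> = real (m i + 1) * (cf n (m i + 1) * p (m(i := m i + 1 + n)))"
    using Suc.IH[of "m(i := m i + 1)"] unfolding fun_upd_upd fun_upd_same by (simp only:)
  also have "\<dots> = cf (Suc n) (m i) * p (m(i := m i + Suc n))"
    unfolding cf_def prod.lessThan_Suc_shift by (simp add: add.commute add.left_commute)
  finally show ?case .
qed

definition Dsem :: "'sp cplx \<Rightarrow> 'sp list \<Rightarrow> (real ^ 'sp::finite \<Rightarrow> real) \<Rightarrow> real ^ 'sp \<Rightarrow> real" where
  "Dsem e xs f = foldr (\<lambda>i g. (pderiv_x i ^^ e i) g) xs f"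

definition Dfor :: "'sp cplx \<Rightarrow> 'sp list \<Rightarrow> ('sp cplx \<Rightarrow> real) \<Rightarrow> 'sp cplx \<Rightarrow> real" where
  "Dfor e xs p = foldr (\<lambda>i q. (pdf i ^^ e i) q) xs p"

lemma Dsem_Dfor:
  "finite (supp p) \<Longrightarrow> Dsem e xs (peval p) = peval (Dfor e xs p) \<and> finite (supp (Dfor e xs p))"
  by (induction xs) (auto simp: Dsem_def Dfor_def pow_pderiv)

lemma Dfor_val:
  assumes "distinct xs"
  shows "Dfor e xs p m = prod_list (map (\<lambda>i. cf (e i) (m i)) xs) *
           p (\<lambda>j. if j \<in> set xs then m j + e j else m j)"
  using assms
proof (induction xs arbitrary: m)
  case Nil then show ?case by (simp add: Dfor_def)
next
  case (Cons i xs)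
  have ni: "i \<notin> set xs" using Cons by simp
  have "Dfor e (i # xs) p m = cf (e i) (m i) * Dfor e xs p (m(i := m i + e i))"
    by (simp add: Dfor_def pow_pdf)
  also have "\<dots> = cf (e i) (m i) * (prod_list (map (\<lambda>j. cf (e j) ((m(i := m i + e i)) j)) xs) *
           p (\<lambda>j. if j \<in> set xs then (m(i := m i + e i)) j + e j else (m(i := m i + e i)) j))"
    using Cons by simp
  also have "map (\<lambda>j. cf (e j) ((m(i := m i + e i)) j)) xs = map (\<lambda>j. cf (e j) (m j)) xs"
    using ni by (intro map_cong refl) auto
  also have "(\<lambda>j. if j \<in> set xs then (m(i := m i + e i)) j + e j else (m(i := m i + e i)) j)
       = (\<lambda>j. if j \<in> set (i # xs) then m j + e j else m j)"
    using ni by (intro ext) auto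
  finally show ?case by simp
qed

lemma monom_zero: "monom_x m (0 :: real ^ 'a::finite) = (if m = (\<lambda>_. 0) then 1 else 0)"
proof (cases "m = (\<lambda>_. 0)")
  case True then show ?thesis by (simp add: monom_x_def)
next
  case False
  then obtain j where "m j \<noteq> 0" by auto
  then have "(\<Prod>i\<in>UNIV. ((0 :: real ^ 'a) $ i) ^ m i) = 0"
    by (intro prod_zero) auto
  then show ?thesis using False by (simp add: monom_x_def)
qed

lemma peval_zero:
  assumes "finite (supp p)"
  shows "peval p 0 = p (\<lambda>_. 0)"
proof -
  have "peval p 0 = (\<Sum>m\<in>insert (\<lambda>_. 0) (supp p). p m * monom_x m 0)"
    by (rule peval_superset) (use assms in auto)
  also have "\<dots> = (\<Sum>m\<in>insert (\<lambda>_. 0) (supp p). if m = (\<lambda>_. 0) then p m else 0)"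
    by (intro sum.cong refl) (simp add: monom_zero)
  also have "\<dots> = p (\<lambda>_. 0)"
    using assms by (subst sum.delta) auto
  finally show ?thesis .
qed

lemma coeff_eq:
  assumes p: "finite (supp p)" and q: "finite (supp q)" and e: "peval p = peval q"
  shows "p m0 = q m0"
proof -
  obtain xs :: "'a list" where xs: "set xs = UNIV" "distinct xs"
    using finite_distinct_list[of "UNIV :: 'a set"] by auto
  have "Dsem m0 xs (peval p) = Dsem m0 xs (peval q)" using e by simp
  then have "peval (Dfor m0 xs p) 0 = peval (Dfor m0 xs q) 0"
    using Dsem_Dfor[OF p] Dsem_Dfor[OF q] by simp
  then have "Dfor m0 xs p (\<lambda>_. 0) = Dfor m0 xs q (\<lambda>_. 0)"
    using peval_zero Dsem_Dfor[OF p] Dsem_Dfor[OF q] by metis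
  moreover have "prod_list (map (\<lambda>i. cf (m0 i) 0) xs) \<noteq> 0"
    using cf_pos by (induction xs) (auto simp: less_imp_neq[symmetric])
  moreover have "(\<lambda>j. if j \<in> set xs then 0 + m0 j else 0) = m0" using xs by auto
  ultimately show ?thesis
    using Dfor_val[OF xs(2), of m0 p "\<lambda>_. 0"] Dfor_val[OF xs(2), of m0 q "\<lambda>_. 0"] by simp
qed


lemma peval_Xv: "peval (Xv i) = (\<lambda>x. x $ i)"
proof
  fix x :: "real ^ 'a"
  have "supp (Xv i) = {cunit i}" by (auto simp: supp_def Xv_def)
  then show "peval (Xv i) x = x $ i" by (simp add: peval_def Xv_def monom_cunit)
qed

lemma fin_Xv: "finite (supp (Xv i))"
  by (rule finite_subset[of _ "{cunit i}"]) (auto simp: supp_def Xv_def)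

lemma iter_sound:
  assumes "finite R" "finite (supp p)"
  shows "(total_deriv R k ^^ l) (peval p) = peval ((TD R k ^^ l) p) \<and> finite (supp ((TD R k ^^ l) p))"
  by (induction l) (auto simp: TD_sound fin_TD assms)

definition act :: "'sp reaction set \<Rightarrow> ('sp cplx \<Rightarrow> real) \<Rightarrow> 'sp cplx \<Rightarrow> ('sp cplx \<times> 'sp \<times> 'sp reaction) set" where
  "act R p m' = {(m,i,r). p m \<noteq> 0 \<and> 0 < m i \<and> r \<in> R \<and> delta r i \<noteq> 0 \<and> m' = cplus (msub m i) (fst r)}"

definition tval :: "('sp reaction \<Rightarrow> real) \<Rightarrow> ('sp cplx \<Rightarrow> real) \<Rightarrow> ('sp cplx \<times> 'sp \<times> 'sp reaction) \<Rightarrow> real" where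
  "tval k p t = (case t of (m,i,r) \<Rightarrow> p m * real (m i) * k r * delta r i)"

lemma act_sub: "act R p m' \<subseteq> supp p \<times> UNIV \<times> R"
  by (auto simp: act_def supp_def)

lemma fin_act: fixes R :: "('sp::finite) reaction set" shows "finite R \<Longrightarrow> finite (supp p) \<Longrightarrow> finite (act R p m')"
  by (rule finite_subset[OF act_sub]) (auto intro!: finite_cartesian_product)

lemma TD_act:
  assumes R: "finite R" and p: "finite (supp p)"
  shows "TD R k p m' = (\<Sum>t\<in>act R p m'. tval k p t)"
proof -
  let ?A = "supp p \<times> (UNIV :: 'a set) \<times> R"
  let ?P = "\<lambda>(m,i,r). 0 < m i \<and> m' = cplus (msub m i) (fst r)"
  have finA: "finite ?A" using R p by (auto intro!: finite_cartesian_product)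
  have "TD R k p m' = (\<Sum>t\<in>?A. if ?P t then tval k p t else 0)"
    unfolding TD_def tval_def
    by (simp add: sum.cartesian_product case_prod_beta cong: if_cong)
  also have "\<dots> = (\<Sum>t\<in>{t\<in>?A. ?P t}. tval k p t)"
    by (simp add: sum.inter_filter finA)
  also have "\<dots> = (\<Sum>t\<in>act R p m'. tval k p t)"
  proof (rule sum.mono_neutral_right)
    show "finite {t \<in> ?A. ?P t}" using finA by simp
    show "act R p m' \<subseteq> {t \<in> ?A. ?P t}" by (auto simp: act_def supp_def)
    show "\<forall>t\<in>{t \<in> ?A. ?P t} - act R p m'. tval k p t = 0"
      by (auto simp: act_def supp_def tval_def)
  qed
  finally show ?thesis .
qed

lemma TD_nz_act:
  assumes "finite R" "finite (supp p)" "TD R k p m' \<noteq> 0"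
  shows "act R p m' \<noteq> {}"
  using assms TD_act by fastforce

lemma proj_TD:
  fixes R R0 :: "('sp::finite) reaction set" and V0 :: "'sp set"
  assumes R: "finite R" and sub: "R0 \<subseteq> R"
    and out: "\<And>r. r \<in> R \<Longrightarrow> r \<notin> R0 \<Longrightarrow> \<exists>x. 0 < fst r x \<and> x \<notin> V0"
    and inV: "\<And>r i. r \<in> R0 \<Longrightarrow> delta r i \<noteq> 0 \<Longrightarrow> i \<in> V0"
    and p: "finite (supp p)" and q: "finite (supp q)"
    and pq: "\<And>m. (\<forall>x. x \<notin> V0 \<longrightarrow> m x = 0) \<Longrightarrow> p m = q m"
    and m': "\<forall>x. x \<notin> V0 \<longrightarrow> m' x = 0"
  shows "TD R k p m' = TD R0 k q m'"
proof -
  have R0: "finite R0" using R sub finite_subset by blast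
  have key: "r \<in> R0 \<and> (\<forall>x. x \<notin> V0 \<longrightarrow> m x = 0)"
    if h: "r \<in> R" "delta r i \<noteq> 0" "0 < m i" "m' = cplus (msub m i) (fst r)" for m i r
  proof -
    have r0: "r \<in> R0"
    proof (rule ccontr)
      assume "r \<notin> R0"
      then obtain x where "0 < fst r x" "x \<notin> V0" using out h(1) by blast
      then show False using m' h(4) by (auto simp: cplus_def)
    qed
    then have "i \<in> V0" using inV h(2) by blast
    moreover have "msub m i x = 0" if "x \<notin> V0" for x
      using m' that h(4) by (auto simp: cplus_def)
    moreover have "m x = 0" if "x \<notin> V0" for x
    proof -
      have "x \<noteq> i" using \<open>i \<in> V0\<close> that by blast
      then show ?thesis using \<open>\<And>x. x \<notin> V0 \<Longrightarrow> msub m i x = 0\<close>[OF that] by (simp add: msub_def)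
    qed
    ultimately show ?thesis using r0 by blast
  qed
  have eq: "act R p m' = act R0 q m'"
  proof
    show "act R p m' \<subseteq> act R0 q m'"
    proof
      fix t assume "t \<in> act R p m'"
      then obtain m i r where t: "t = (m,i,r)" "p m \<noteq> 0" "0 < m i" "r \<in> R" "delta r i \<noteq> 0"
        "m' = cplus (msub m i) (fst r)" unfolding act_def by blast
      with key[OF t(4,5,3,6)] pq show "t \<in> act R0 q m'" unfolding act_def by auto
    qed
    show "act R0 q m' \<subseteq> act R p m'"
    proof
      fix t assume "t \<in> act R0 q m'"
      then obtain m i r where t: "t = (m,i,r)" "q m \<noteq> 0" "0 < m i" "r \<in> R0" "delta r i \<noteq> 0"
        "m' = cplus (msub m i) (fst r)" unfolding act_def by blast
      then have "r \<in> R" using sub by blast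
      with key[OF this t(5,3,6)] pq t show "t \<in> act R p m'" unfolding act_def by auto
    qed
  qed
  have "TD R k p m' = (\<Sum>t\<in>act R p m'. tval k p t)" by (rule TD_act[OF R p])
  also have "\<dots> = (\<Sum>t\<in>act R0 q m'. tval k q t)"
    unfolding eq
  proof (rule sum.cong[OF refl])
    fix t assume "t \<in> act R0 q m'"
    then obtain m i r where t: "t = (m,i,r)" "r \<in> R0" "delta r i \<noteq> 0" "0 < m i" "m' = cplus (msub m i) (fst r)"
      by (auto simp: act_def)
    then have "p m = q m" using key sub pq by blast
    then show "tval k p t = tval k q t" by (simp add: t tval_def)
  qed
  also have "\<dots> = TD R0 k q m'" by (rule TD_act[OF R0 q, symmetric])
  finally show ?thesis .
qed

lemma proj_iter:
  fixes R R0 :: "('sp::finite) reaction set" and V0 :: "'sp set"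
  assumes R: "finite R" and sub: "R0 \<subseteq> R"
    and out: "\<And>r. r \<in> R \<Longrightarrow> r \<notin> R0 \<Longrightarrow> \<exists>x. 0 < fst r x \<and> x \<notin> V0"
    and inV: "\<And>r i. r \<in> R0 \<Longrightarrow> delta r i \<noteq> 0 \<Longrightarrow> i \<in> V0"
    and p: "finite (supp p)"
  shows "\<forall>m'. (\<forall>x. x \<notin> V0 \<longrightarrow> m' x = 0) \<longrightarrow> (TD R k ^^ l) p m' = (TD R0 k ^^ l) p m'"
proof (induction l)
  case 0 then show ?case by simp
next
  case (Suc l)
  have R0: "finite R0" using R sub finite_subset by blast
  show ?case
  proof (intro allI impI)
    fix m' :: "'sp cplx" assume m': "\<forall>x. x \<notin> V0 \<longrightarrow> m' x = 0"
    have f1: "finite (supp ((TD R k ^^ l) p))" using iter_sound[OF R p] by blast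
    have f2: "finite (supp ((TD R0 k ^^ l) p))" using iter_sound[OF R0 p] by blast
    have "TD R k ((TD R k ^^ l) p) m' = TD R0 k ((TD R0 k ^^ l) p) m'"
      by (rule proj_TD[OF R sub out inV f1 f2 _ m']) (use Suc in blast)+
    then show "(TD R k ^^ Suc l) p m' = (TD R0 k ^^ Suc l) p m'" by simp
  qed
qed



lemma delta_rA: "delta (rA Y S U j) x = of_bool (x = U j) - of_bool (x = Y) - of_bool (x = S (j - 1))"
  by (simp add: delta_def rA_def cunit_def cplus_def)
lemma delta_rB: "delta (rB Y S U j) x = of_bool (x = Y) + of_bool (x = S (j - 1)) - of_bool (x = U j)"
  by (simp add: delta_def rB_def cunit_def cplus_def)
lemma delta_rC: "delta (rC Y S U j) x = of_bool (x = Y) + of_bool (x = S j) - of_bool (x = U j)"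
  by (simp add: delta_def rC_def cunit_def cplus_def)

lemma fst_rA: "fst (rA Y S U j) = cplus (cunit Y) (cunit (S (j - 1)))" by (simp add: rA_def)
lemma fst_rB: "fst (rB Y S U j) = cunit (U j)" by (simp add: rB_def)
lemma fst_rC: "fst (rC Y S U j) = cunit (U j)" by (simp add: rC_def)

lemma mem_chain: "r \<in> chain_reactions Y S U L \<longleftrightarrow>
   (\<exists>j. 1 \<le> j \<and> j \<le> L \<and> (r = rA Y S U j \<or> r = rB Y S U j \<or> r = rC Y S U j))"
  by (auto simp: chain_reactions_def)

lemma fin_chain: "finite (chain_reactions Y S U L)"
  by (simp add: chain_reactions_def)

locale chain =
  fixes Y :: "'sp::finite" and S U :: "nat \<Rightarrow> 'sp" and L :: nat
  assumes L1: "1 \<le> L"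
   and SY: "\<And>j. j \<le> L \<Longrightarrow> S j \<noteq> Y"
   and UY: "\<And>j. 1 \<le> j \<Longrightarrow> j \<le> L \<Longrightarrow> U j \<noteq> Y"
   and US: "\<And>j j'. j \<le> L \<Longrightarrow> 1 \<le> j' \<Longrightarrow> j' \<le> L \<Longrightarrow> U j' \<noteq> S j"
   and Sinj: "\<And>i j. i \<le> L \<Longrightarrow> j \<le> L \<Longrightarrow> S i = S j \<Longrightarrow> i = j"
   and Uinj: "\<And>i j. 1 \<le> i \<Longrightarrow> i \<le> L \<Longrightarrow> 1 \<le> j \<Longrightarrow> j \<le> L \<Longrightarrow> U i = U j \<Longrightarrow> i = j"
begin

abbreviation "R0 \<equiv> chain_reactions Y S U L"
abbreviation "ra \<equiv> rA Y S U"
abbreviation "rb \<equiv> rB Y S U"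
abbreviation "rc \<equiv> rC Y S U"

lemma SY'[simp]: "j \<le> L \<Longrightarrow> Y \<noteq> S j" "j \<le> L \<Longrightarrow> S j \<noteq> Y" using SY by metis+
lemma UY'[simp]: "1 \<le> j \<Longrightarrow> j \<le> L \<Longrightarrow> Y \<noteq> U j" "1 \<le> j \<Longrightarrow> j \<le> L \<Longrightarrow> U j \<noteq> Y" using UY by metis+
lemma US'[simp]: "j \<le> L \<Longrightarrow> 1 \<le> j' \<Longrightarrow> j' \<le> L \<Longrightarrow> U j' \<noteq> S j"
  "j \<le> L \<Longrightarrow> 1 \<le> j' \<Longrightarrow> j' \<le> L \<Longrightarrow> S j \<noteq> U j'" using US by metis+
lemma Sinj'[simp]: "i \<le> L \<Longrightarrow> j \<le> L \<Longrightarrow> S i = S j \<longleftrightarrow> i = j" using Sinj by metis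
lemma Uinj'[simp]: "1 \<le> i \<Longrightarrow> i \<le> L \<Longrightarrow> 1 \<le> j \<Longrightarrow> j \<le> L \<Longrightarrow> U i = U j \<longleftrightarrow> i = j" using Uinj by metis

definition w :: "'sp \<Rightarrow> nat" where
  "w x = (if x \<in> S ` {0..L} then 2 * (L - the_inv_into {0..L} S x)
          else if x \<in> U ` {1..L} then 2 * (L - the_inv_into {1..L} U x) + 1 else 0)"

lemma injS: "inj_on S {0..L}" by (auto intro!: inj_onI)
lemma injU: "inj_on U {1..L}" by (auto intro!: inj_onI)

lemma w_S[simp]: "j \<le> L \<Longrightarrow> w (S j) = 2 * (L - j)"
  unfolding w_def using the_inv_into_f_f[OF injS, of j] by auto
lemma w_U[simp]: "1 \<le> j \<Longrightarrow> j \<le> L \<Longrightarrow> w (U j) = 2 * (L - j) + 1"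
proof -
  assume j: "1 \<le> j" "j \<le> L"
  have "U j \<notin> S ` {0..L}" using j by auto
  then show ?thesis unfolding w_def using the_inv_into_f_f[OF injU, of j] j by auto
qed
lemma w_Y[simp]: "w Y = 0"
proof -
  have "Y \<notin> S ` {0..L}" "Y \<notin> U ` {1..L}" by auto
  then show ?thesis unfolding w_def by simp
qed

definition lev :: "'sp cplx \<Rightarrow> nat" where "lev m = (\<Sum>x\<in>UNIV. m x * w x)"
definition nony :: "'sp cplx \<Rightarrow> nat" where "nony m = (\<Sum>x\<in>UNIV. if x = Y then 0 else m x)"
definition ymon :: "nat \<Rightarrow> 'sp cplx" where "ymon n = (\<lambda>x. if x = Y then n else 0)"

lemma lev_cplus: "lev (cplus a b) = lev a + lev b"
  unfolding lev_def cplus_def sum.distrib[symmetric] by (intro sum.cong refl) (simp add: add_mult_distrib)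
lemma nony_cplus: "nony (cplus a b) = nony a + nony b"
  unfolding nony_def cplus_def sum.distrib[symmetric] by (intro sum.cong refl) simp
lemma lev_cunit: "lev (cunit x) = w x"
proof -
  have "(\<lambda>z. cunit x z * w z) = (\<lambda>z. if x = z then w x else 0)" by (auto simp: cunit_def)
  then show ?thesis unfolding lev_def by (simp only:) simp
qed
lemma nony_cunit: "nony (cunit x) = (if x = Y then 0 else 1)"
proof -
  have "(\<lambda>z. if z = Y then 0 else cunit x z) = (\<lambda>z. if x = z then (if x = Y then 0 else 1) else 0)"
    by (auto simp: cunit_def)
  then show ?thesis unfolding nony_def by (simp only:) simp
qed
lemma lev_ymon: "lev (ymon n) = 0"
  unfolding lev_def ymon_def by (auto intro: sum.neutral)
lemma nony_ymon: "nony (ymon n) = 0"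
  unfolding nony_def ymon_def by (auto intro: sum.neutral)

lemma lev_msub: "0 < m i \<Longrightarrow> lev m = lev (msub m i) + w i"
proof -
  assume h: "0 < m i"
  have "m = cplus (msub m i) (cunit i)" using h by (intro ext) (auto simp: cplus_def msub_def cunit_def)
  from arg_cong[where f=lev, OF this] show ?thesis by (simp only: lev_cplus lev_cunit)
qed
lemma nony_msub: "0 < m i \<Longrightarrow> nony m = nony (msub m i) + (if i = Y then 0 else 1)"
proof -
  assume h: "0 < m i"
  have "m = cplus (msub m i) (cunit i)" using h by (intro ext) (auto simp: cplus_def msub_def cunit_def)
  from arg_cong[where f=nony, OF this] show ?thesis by (simp only: nony_cplus nony_cunit)
qed


lemma delta_nz_cases:
  assumes "r \<in> R0" "delta r i \<noteq> 0"
  obtains j where "1 \<le> j" "j \<le> L" "r = ra j" "i = U j \<or> i = Y \<or> i = S (j - 1)"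
  | j where "1 \<le> j" "j \<le> L" "r = rb j" "i = U j \<or> i = Y \<or> i = S (j - 1)"
  | j where "1 \<le> j" "j \<le> L" "r = rc j" "i = U j \<or> i = Y \<or> i = S j"
proof -
  from assms(1) obtain j where j: "1 \<le> j" "j \<le> L" "r = ra j \<or> r = rb j \<or> r = rc j"
    unfolding mem_chain by blast
  then consider "r = ra j" | "r = rb j" | "r = rc j" by blast
  then show thesis
  proof cases
    case 1
    then have "i = U j \<or> i = Y \<or> i = S (j - 1)" using assms(2)
      by (cases "i = U j \<or> i = Y \<or> i = S (j - 1)") (auto simp: delta_rA)
    then show thesis using that(1) j 1 by blast
  next
    case 2
    then have "i = U j \<or> i = Y \<or> i = S (j - 1)" using assms(2)
      by (cases "i = U j \<or> i = Y \<or> i = S (j - 1)") (auto simp: delta_rB)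
    then show thesis using that(2) j 2 by blast
  next
    case 3
    then have "i = U j \<or> i = Y \<or> i = S j" using assms(2)
      by (cases "i = U j \<or> i = Y \<or> i = S j") (auto simp: delta_rC)
    then show thesis using that(3) j 3 by blast
  qed
qed

lemma step_class:
  assumes r: "r \<in> R0" and d: "delta r i \<noteq> 0"
  shows "nony (fst r) = 1 \<and> (i \<noteq> Y \<longrightarrow> lev (fst r) \<le> w i + 1 \<and> (lev (fst r) = w i + 1 \<longrightarrow>
          (\<exists>j. 1 \<le> j \<and> j \<le> L \<and> ((r = ra j \<and> i = U j) \<or> (r = rc j \<and> i = S j)))))"
  using r d
proof (cases rule: delta_nz_cases)
  case (1 j)
  have n: "nony (fst r) = 1" and l: "lev (fst r) = 2 * (L - (j - 1))" using 1
    by (simp_all add: fst_rA nony_cplus nony_cunit lev_cplus lev_cunit)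
  show ?thesis
  proof (cases "i = Y")
    case True then show ?thesis using n by simp
  next
    case False
    then consider "i = U j" | "i = S (j - 1)" using 1 by blast
    then show ?thesis
    proof cases
      case a: 1
      then have "w i = 2 * (L - j) + 1" using \<open>1 \<le> j\<close> \<open>j \<le> L\<close> by simp
      then have "lev (fst r) = w i + 1" using l \<open>1 \<le> j\<close> \<open>j \<le> L\<close> by arith
      then show ?thesis using n a \<open>1 \<le> j\<close> \<open>j \<le> L\<close> \<open>r = ra j\<close> by auto
    next
      case a: 2
      then have "w i = 2 * (L - (j - 1))" using \<open>1 \<le> j\<close> \<open>j \<le> L\<close> by simp
      then have "lev (fst r) = w i" using l by arith
      then show ?thesis using n by simp
    qed
  qed
next
  case (2 j)
  have n: "nony (fst r) = 1" and l: "lev (fst r) = 2 * (L - j) + 1" using 2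
    by (simp_all add: fst_rB nony_cunit lev_cunit)
  show ?thesis
  proof (cases "i = Y")
    case True then show ?thesis using n by simp
  next
    case False
    then consider "i = U j" | "i = S (j - 1)" using 2 by blast
    then show ?thesis
    proof cases
      case a: 1
      then have "w i = 2 * (L - j) + 1" using \<open>1 \<le> j\<close> \<open>j \<le> L\<close> by simp
      then have "lev (fst r) = w i" using l by arith
      then show ?thesis using n by simp
    next
      case a: 2
      then have "w i = 2 * (L - (j - 1))" using \<open>1 \<le> j\<close> \<open>j \<le> L\<close> by simp
      then have "lev (fst r) + 1 = w i" using l \<open>1 \<le> j\<close> \<open>j \<le> L\<close> by arith
      then show ?thesis using n by simp
    qed
  qed
next
  case (3 j)
  have n: "nony (fst r) = 1" and l: "lev (fst r) = 2 * (L - j) + 1" using 3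
    by (simp_all add: fst_rC nony_cunit lev_cunit)
  show ?thesis
  proof (cases "i = Y")
    case True then show ?thesis using n by simp
  next
    case False
    then consider "i = U j" | "i = S j" using 3 by blast
    then show ?thesis
    proof cases
      case a: 1
      then have "w i = 2 * (L - j) + 1" using \<open>1 \<le> j\<close> \<open>j \<le> L\<close> by simp
      then have "lev (fst r) = w i" using l by arith
      then show ?thesis using n by simp
    next
      case a: 2
      then have "w i = 2 * (L - j)" using \<open>j \<le> L\<close> by simp
      then have "lev (fst r) = w i + 1" using l by arith
      then show ?thesis using n a \<open>1 \<le> j\<close> \<open>j \<le> L\<close> \<open>r = rc j\<close> by auto
    qed
  qed
qed


definition i0 :: "nat \<Rightarrow> 'sp" where
  "i0 l = (if even l then S (L - l div 2) else U (L - l div 2))"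
definition r0 :: "nat \<Rightarrow> 'sp reaction" where
  "r0 l = (if even l then rc (L - l div 2) else ra (L - l div 2))"
definition path :: "nat \<Rightarrow> 'sp cplx" where
  "path l = cplus (ymon (l div 2)) (cunit (i0 l))"

primrec cp :: "('sp reaction \<Rightarrow> real) \<Rightarrow> nat \<Rightarrow> real" where
  "cp k 0 = 1"
| "cp k (Suc l) = cp k l * k (r0 l)"

lemma parity_cases:
  fixes l :: nat
  obtains t where "l = 2 * t" "l div 2 = t" "even l" | t where "l = 2 * t + 1" "l div 2 = t" "odd l"
  by (metis even_two_times_div_two odd_two_times_div_two_succ)

lemma i0_ne_Y: "l \<le> 2 * L \<Longrightarrow> i0 l \<noteq> Y"
  by (cases l rule: parity_cases) (auto simp: i0_def)

lemma nony_path: "l \<le> 2 * L \<Longrightarrow> nony (path l) = 1"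
  using i0_ne_Y by (simp add: path_def nony_cplus nony_ymon nony_cunit)

lemma lev_path: "l \<le> 2 * L \<Longrightarrow> lev (path l) = l"
proof (cases l rule: parity_cases)
  case (1 t)
  assume "l \<le> 2 * L"
  then show ?thesis using 1 by (simp add: path_def lev_cplus lev_ymon lev_cunit i0_def)
next
  case (2 t)
  assume "l \<le> 2 * L"
  then show ?thesis using 2 by (simp add: path_def lev_cplus lev_ymon lev_cunit i0_def)
qed

lemma path_i0: "l \<le> 2 * L \<Longrightarrow> path l (i0 l) = 1"
  using i0_ne_Y by (simp add: path_def cplus_def ymon_def cunit_def)

lemma path_unique: "l \<le> 2 * L \<Longrightarrow> 0 < path l i \<Longrightarrow> i \<noteq> Y \<Longrightarrow> i = i0 l"
  by (auto simp: path_def cplus_def ymon_def cunit_def split: if_splits)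

lemma r0_mem: "l < 2 * L \<Longrightarrow> r0 l \<in> R0"
proof (cases l rule: parity_cases)
  case (1 t)
  assume "l < 2 * L"
  then show ?thesis using 1 unfolding mem_chain r0_def by (intro exI[where x="L-t"]) auto
next
  case (2 t)
  assume "l < 2 * L"
  then show ?thesis using 2 unfolding mem_chain r0_def by (intro exI[where x="L-t"]) auto
qed

lemma delta_r0: "l < 2 * L \<Longrightarrow> delta (r0 l) (i0 l) = 1"
  by (cases l rule: parity_cases) (auto simp: r0_def i0_def delta_rA delta_rC)

lemma path_step: "l < 2 * L \<Longrightarrow> cplus (msub (path l) (i0 l)) (fst (r0 l)) = path (Suc l)"
proof (cases l rule: parity_cases)
  case (1 t)
  assume "l < 2 * L"
  then have t: "t < L" using 1 by simp
  have "Suc l div 2 = t" "odd (Suc l)" using 1 by auto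
  then show ?thesis using 1 t
    by (intro ext) (auto simp: path_def r0_def i0_def fst_rC cplus_def msub_def ymon_def cunit_def)
next
  case (2 t)
  assume "l < 2 * L"
  then have t: "t + 1 \<le> L" using 2 by simp
  have "Suc l div 2 = Suc t" "even (Suc l)" using 2 by auto
  moreover have "L - t - 1 = L - Suc t" by simp
  ultimately show ?thesis using 2 t
    by (intro ext) (auto simp: path_def r0_def i0_def fst_rA cplus_def msub_def ymon_def cunit_def)
qed

lemma class_unique:
  assumes "l < 2 * L" "1 \<le> j" "j \<le> L" "(r = ra j \<and> i = U j) \<or> (r = rc j \<and> i = S j)" "i = i0 l"
  shows "r = r0 l"
proof (cases l rule: parity_cases)
  case (1 t)
  then show ?thesis using assms by (auto simp: i0_def r0_def)
next
  case (2 t)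
  then show ?thesis using assms by (auto simp: i0_def r0_def)
qed

lemma cp_pos: "(\<forall>r\<in>R0. 0 < k r) \<Longrightarrow> l \<le> 2 * L \<Longrightarrow> 0 < cp k l"
  by (induction l) (auto simp: r0_mem)


abbreviation P :: "('sp reaction \<Rightarrow> real) \<Rightarrow> nat \<Rightarrow> 'sp cplx \<Rightarrow> real" where
  "P k l \<equiv> (TD R0 k ^^ l) (Xv (S L))"

lemma finP: "finite (supp (P k l))"
  using iter_sound[OF fin_chain fin_Xv] by blast

lemma act_elim:
  assumes "t \<in> act R0 p m'"
  obtains m i r where "t = (m,i,r)" "p m \<noteq> 0" "0 < m i" "r \<in> R0" "delta r i \<noteq> 0"
    "m' = cplus (msub m i) (fst r)"
  using assms unfolding act_def by blast

lemma inv: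
  assumes kpos: "\<forall>r\<in>R0. 0 < k r"
  shows "l \<le> 2 * L \<Longrightarrow> (\<forall>m. P k l m \<noteq> 0 \<longrightarrow> 1 \<le> nony m \<and> (nony m = 1 \<longrightarrow> lev m \<le> l \<and> (lev m = l \<longrightarrow> m = path l)))
          \<and> P k l (path l) = cp k l"
proof (induction l)
  case 0
  have p0: "path 0 = cunit (S L)" by (intro ext) (simp add: path_def i0_def cplus_def ymon_def)
  have "nony (cunit (S L)) = 1" "lev (cunit (S L)) = 0" by (simp_all add: nony_cunit lev_cunit)
  then show ?case by (auto simp: Xv_def p0)
next
  case (Suc l)
  then have l: "l < 2 * L" by simp
  then have IH: "\<forall>m. P k l m \<noteq> 0 \<longrightarrow> 1 \<le> nony m \<and> (nony m = 1 \<longrightarrow> lev m \<le> l \<and> (lev m = l \<longrightarrow> m = path l))"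
    "P k l (path l) = cp k l" using Suc by auto
  have claimA: "i \<noteq> Y \<and> lev m' \<le> Suc l \<and> (lev m' = Suc l \<longrightarrow> m = path l \<and> i = i0 l \<and> r = r0 l)"
    if t: "(m,i,r) \<in> act R0 (P k l) m'" and n1: "nony m' = 1" for m i r m'
  proof -
    from t have pm: "P k l m \<noteq> 0" and mi: "0 < m i" and r: "r \<in> R0" and d: "delta r i \<noteq> 0"
      and m': "m' = cplus (msub m i) (fst r)" unfolding act_def by auto
    have sc: "nony (fst r) = 1 \<and> (i \<noteq> Y \<longrightarrow> lev (fst r) \<le> w i + 1 \<and> (lev (fst r) = w i + 1 \<longrightarrow>
          (\<exists>j. 1 \<le> j \<and> j \<le> L \<and> ((r = ra j \<and> i = U j) \<or> (r = rc j \<and> i = S j)))))"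
      by (rule step_class[OF r d])
    have nm': "nony m' = nony (msub m i) + nony (fst r)" and lm': "lev m' = lev (msub m i) + lev (fst r)"
      using m' by (simp_all add: nony_cplus lev_cplus)
    have nm: "nony m = nony (msub m i) + (if i = Y then 0 else 1)" using nony_msub[of m i] mi by blast
    have lm: "lev m = lev (msub m i) + w i" using lev_msub[of m i] mi by blast
    have "1 \<le> nony m" using IH(1) pm by blast
    then have iY: "i \<noteq> Y" and nm1: "nony m = 1" using nm nm' n1 sc by (auto split: if_splits)
    then have lmle: "lev m \<le> l" and lmeq: "lev m = l \<longrightarrow> m = path l" using IH(1) pm by auto
    have fle: "lev (fst r) \<le> w i + 1" using sc iY by blast
    have le: "lev m' \<le> Suc l" using lm lm' lmle fle by linarith
    moreover have "m = path l \<and> i = i0 l \<and> r = r0 l" if eq: "lev m' = Suc l"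
    proof -
      have "lev m = l" "lev (fst r) = w i + 1" using eq lm lm' lmle fle by linarith+
      then have mp: "m = path l" using lmeq by blast
      obtain j where j: "1 \<le> j" "j \<le> L" "(r = ra j \<and> i = U j) \<or> (r = rc j \<and> i = S j)"
        using sc iY \<open>lev (fst r) = w i + 1\<close> by blast
      have ii: "i = i0 l" using path_unique[of l i] l mi mp iY by simp
      have "r = r0 l" using class_unique[OF l j ii] .
      then show ?thesis using mp ii by blast
    qed
    ultimately show ?thesis using iY by blast
  qed
  have part1: "\<forall>m'. P k (Suc l) m' \<noteq> 0 \<longrightarrow> 1 \<le> nony m' \<and> (nony m' = 1 \<longrightarrow> lev m' \<le> Suc l \<and> (lev m' = Suc l \<longrightarrow> m' = path (Suc l)))"
  proof (intro allI impI)
    fix m' assume "P k (Suc l) m' \<noteq> 0"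
    then have "TD R0 k (P k l) m' \<noteq> 0" by simp
    then have "act R0 (P k l) m' \<noteq> {}" using TD_nz_act[OF fin_chain finP] by blast
    then obtain m i r where t: "(m,i,r) \<in> act R0 (P k l) m'" by auto
    then have r: "r \<in> R0" and d: "delta r i \<noteq> 0" and m': "m' = cplus (msub m i) (fst r)"
      unfolding act_def by auto
    have "nony (fst r) = 1" using step_class[OF r d] by blast
    then have "1 \<le> nony m'" using m' by (simp add: nony_cplus)
    moreover have "lev m' \<le> Suc l \<and> (lev m' = Suc l \<longrightarrow> m' = path (Suc l))" if "nony m' = 1"
      using claimA[OF t that] m' path_step[OF l] by blast
    ultimately show "1 \<le> nony m' \<and> (nony m' = 1 \<longrightarrow> lev m' \<le> Suc l \<and> (lev m' = Suc l \<longrightarrow> m' = path (Suc l)))"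
      by blast
  qed
  have actE: "act R0 (P k l) (path (Suc l)) = {(path l, i0 l, r0 l)}"
  proof
    show "act R0 (P k l) (path (Suc l)) \<subseteq> {(path l, i0 l, r0 l)}"
    proof
      fix t assume t: "t \<in> act R0 (P k l) (path (Suc l))"
      obtain m i r where "t = (m,i,r)" using prod_cases3 by blast
      then show "t \<in> {(path l, i0 l, r0 l)}"
        using claimA[of m i r "path (Suc l)"] t nony_path[of "Suc l"] lev_path[of "Suc l"] Suc.prems by auto
    qed
    have "P k l (path l) \<noteq> 0" using IH(2) cp_pos[OF kpos, of l] l by simp
    moreover have "0 < path l (i0 l)" using path_i0[of l] l by simp
    ultimately show "{(path l, i0 l, r0 l)} \<subseteq> act R0 (P k l) (path (Suc l))"
      using r0_mem[OF l] delta_r0[OF l] path_step[OF l] by (simp add: act_def)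
  qed
  have "P k (Suc l) (path (Suc l)) = TD R0 k (P k l) (path (Suc l))" by simp
  also have "\<dots> = tval k (P k l) (path l, i0 l, r0 l)"
    by (simp add: TD_act[OF fin_chain finP] actE)
  also have "\<dots> = cp k (Suc l)"
    using IH(2) path_i0[of l] delta_r0[OF l] l by (simp add: tval_def)
  finally show ?case using part1 by blast
qed


definition tot :: "'sp cplx \<Rightarrow> nat" where "tot m = (\<Sum>x\<in>UNIV. m x)"
lemma tot_cplus: "tot (cplus a b) = tot a + tot b"
  unfolding tot_def cplus_def by (simp add: sum.distrib)
lemma tot_cunit: "tot (cunit x) = 1"
proof -
  have "(\<lambda>z. cunit x z) = (\<lambda>z. if x = z then 1 else 0)" by (auto simp: cunit_def)
  then show ?thesis unfolding tot_def by (simp only:) simp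
qed

lemma cplus_cancel: "cplus a b = cplus a c \<Longrightarrow> b = c"
  by (intro ext) (drule fun_cong, simp add: cplus_def)
lemma cplus_comm: "cplus a b = cplus b a"
  by (intro ext) (simp add: cplus_def)
lemma cplus_assoc: "cplus (cplus a b) c = cplus a (cplus b c)"
  by (intro ext) (simp add: cplus_def)
lemma cplus_zero: "cplus (\<lambda>_. 0) b = b"
  by (intro ext) (simp add: cplus_def)
lemma cunit_inj: "cunit a = cunit b \<longleftrightarrow> a = b"
  by (metis cunit_def one_neq_zero)
lemma msub_cunit: "msub (cunit x) x = (\<lambda>_. 0)"
  by (intro ext) (simp add: msub_def cunit_def)
lemma pos_cunit: "0 < cunit x i \<Longrightarrow> i = x"
  by (simp add: cunit_def split: if_splits)

definition Q2 :: "'sp cplx" where "Q2 = cplus (cunit Y) (cunit (S (L - 1)))"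

lemma path1: "path 1 = cunit (U L)"
  by (intro ext) (simp add: path_def i0_def cplus_def ymon_def)
lemma path2: "path 2 = Q2"
proof -
  have "ymon 1 = cunit Y" by (intro ext) (simp add: ymon_def cunit_def)
  then show ?thesis by (simp add: path_def i0_def Q2_def)
qed

lemma Q2_pos: "0 < Q2 i \<Longrightarrow> i = Y \<or> i = S (L - 1)"
  by (auto simp: Q2_def cplus_def cunit_def split: if_splits)
lemma msub_Q2_Y: "msub Q2 Y = cunit (S (L - 1))"
  by (intro ext) (simp add: Q2_def msub_def cplus_def cunit_def)
lemma msub_Q2_S: "msub Q2 (S (L - 1)) = cunit Y"
  by (intro ext) (simp add: Q2_def msub_def cplus_def cunit_def)
lemma Q2_Y: "Q2 Y = 1" by (simp add: Q2_def cplus_def cunit_def)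

lemma delta_SL: assumes "r \<in> R0" "delta r (S L) \<noteq> 0" shows "r = rc L"
  using assms
proof (cases rule: delta_nz_cases)
  case (1 j)
  then have "S L = S (j - 1)" by simp
  then have "L = j - 1" using 1 Sinj[of L "j - 1"] by simp
  then show ?thesis using 1 L1 by simp
next
  case (2 j)
  then have "S L = S (j - 1)" by simp
  then have "L = j - 1" using 2 Sinj[of L "j - 1"] by simp
  then show ?thesis using 2 L1 by simp
next
  case (3 j)
  then have "S L = S j" by auto
  then have "L = j" using 3 Sinj[of L j] by simp
  then show ?thesis using 3 by simp
qed

lemma delta_UL: assumes "r \<in> R0" "delta r (U L) \<noteq> 0" shows "r = ra L \<or> r = rb L \<or> r = rc L"
  using assms
proof (cases rule: delta_nz_cases)
  case (1 j)
  then have "U L = U j" using L1 UY[of L] US[of "j - 1" L] US[of j L] by auto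
  then have "L = j" using 1 L1 Uinj[of L j] by simp
  then show ?thesis using 1 by simp
next
  case (2 j)
  then have "U L = U j" using L1 UY[of L] US[of "j - 1" L] US[of j L] by auto
  then have "L = j" using 2 L1 Uinj[of L j] by simp
  then show ?thesis using 2 by simp
next
  case (3 j)
  then have "U L = U j" using L1 UY[of L] US[of "j - 1" L] US[of j L] by auto
  then have "L = j" using 3 L1 Uinj[of L j] by simp
  then show ?thesis using 3 by simp
qed

lemma rb_ne_rc: "1 \<le> j \<Longrightarrow> j \<le> L \<Longrightarrow> rb j \<noteq> rc j"
proof
  assume j: "1 \<le> j" "j \<le> L" and e: "rb j = rc j"
  have "snd (rb j) (S j) = snd (rc j) (S j)" using e by simp
  moreover have "S (j - 1) \<noteq> S j" using j Sinj[of "j - 1" j] by auto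
  moreover have "S j \<noteq> Y" using j SY by blast
  ultimately show False by (simp add: rB_def rC_def cplus_def cunit_def)
qed

lemma supp_P1: "P k 1 m \<noteq> 0 \<Longrightarrow> m = cunit (U L)"
proof -
  assume "P k 1 m \<noteq> 0"
  then have "TD R0 k (Xv (S L)) m \<noteq> 0" by simp
  then obtain t where "t \<in> act R0 (Xv (S L)) m" using TD_nz_act[OF fin_chain fin_Xv] by blast
  then obtain m0 i r where "Xv (S L) m0 \<noteq> 0" "0 < m0 i" "r \<in> R0" "delta r i \<noteq> 0"
    "m = cplus (msub m0 i) (fst r)" by (rule act_elim)
  then have "m0 = cunit (S L)" "i = S L" by (auto simp: Xv_def split: if_splits dest: pos_cunit)
  moreover have "r = rc L" using delta_SL \<open>r \<in> R0\<close> \<open>delta r i \<noteq> 0\<close> \<open>i = S L\<close> by blast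
  ultimately show ?thesis using \<open>m = _\<close>
    by (simp add: msub_cunit cplus_zero fst_rC)
qed

lemma P1_val: "(\<forall>r\<in>R0. 0 < k r) \<Longrightarrow> P k 1 (cunit (U L)) = k (rc L)"
  using inv[of k 1] L1 path1 by (simp add: r0_def)

lemma supp_P2: "P k 2 m \<noteq> 0 \<Longrightarrow> m = Q2 \<or> m = cunit (U L)"
proof -
  assume "P k 2 m \<noteq> 0"
  then have "TD R0 k (P k 1) m \<noteq> 0" by (simp add: numeral_2_eq_2)
  then obtain t where "t \<in> act R0 (P k 1) m" using TD_nz_act[OF fin_chain finP] by blast
  then obtain m0 i r where h: "P k 1 m0 \<noteq> 0" "0 < m0 i" "r \<in> R0" "delta r i \<noteq> 0"
    "m = cplus (msub m0 i) (fst r)" by (rule act_elim)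
  then have "m0 = cunit (U L)" "i = U L" using supp_P1 by (auto dest: pos_cunit)
  then have "r = ra L \<or> r = rb L \<or> r = rc L" "m = fst r"
    using h delta_UL by (auto simp: msub_cunit cplus_zero)
  then show ?thesis by (auto simp: fst_rA fst_rB fst_rC Q2_def)
qed

lemma P2_Q2: "(\<forall>r\<in>R0. 0 < k r) \<Longrightarrow> P k 2 Q2 = k (rc L) * k (ra L)"
  using inv[of k 2] L1 path2 by (simp add: r0_def numeral_2_eq_2)


lemma fstR0_cases:
  assumes "r \<in> R0"
  obtains j where "1 \<le> j" "j \<le> L" "r = ra j" "fst r = cplus (cunit Y) (cunit (S (j - 1)))"
    "fst r Y = 1" "tot (fst r) = 2"
  | j where "1 \<le> j" "j \<le> L" "r = rb j \<or> r = rc j" "fst r = cunit (U j)" "fst r Y = 0" "tot (fst r) = 1"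
proof -
  from assms obtain j where j: "1 \<le> j" "j \<le> L" "r = ra j \<or> r = rb j \<or> r = rc j"
    unfolding mem_chain by blast
  show thesis
  proof (cases "r = ra j")
    case True
    have "S (j - 1) \<noteq> Y" using j SY[of "j - 1"] by simp
    then have "fst r Y = 1" using True by (simp add: fst_rA cplus_def cunit_def)
    moreover have "tot (fst r) = 2" using True by (simp add: fst_rA tot_cplus tot_cunit)
    ultimately show thesis using that(1)[OF j(1,2) True] True by (simp add: fst_rA)
  next
    case False
    then have r: "r = rb j \<or> r = rc j" using j by blast
    have "U j \<noteq> Y" using j UY by blast
    have f: "fst r = cunit (U j)" using r by (auto simp: fst_rB fst_rC)
    then have "fst r Y = 0" using \<open>U j \<noteq> Y\<close> by (simp add: cunit_def)
    moreover have "tot (fst r) = 1" using f by (simp add: tot_cunit)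
    ultimately show thesis using that(2)[OF j(1,2) r f] by simp
  qed
qed

lemma P2_UL:
  assumes kpos: "\<forall>r\<in>R0. 0 < k r"
  shows "P k 2 (cunit (U L)) = - (k (rc L) * (k (rb L) + k (rc L)))"
proof -
  have UY0: "U L \<noteq> Y" using UY L1 by blast
  have US0: "U L \<noteq> S (L - 1)" using US[of "L - 1" L] L1 by simp
  have ne: "rb L \<noteq> rc L" using rb_ne_rc L1 by blast
  have mem: "rb L \<in> R0" "rc L \<in> R0" using L1 unfolding mem_chain by auto
  have dB: "delta (rb L) (U L) = -1" using UY0 US0 by (simp add: delta_rB)
  have dC: "delta (rc L) (U L) = -1" using UY0 US[of L L] L1 by (simp add: delta_rC)
  have P1v: "P k 1 (cunit (U L)) = k (rc L)" by (rule P1_val[OF kpos])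
  have actE: "act R0 (P k 1) (cunit (U L)) = {(cunit (U L), U L, rb L), (cunit (U L), U L, rc L)}"
  proof
    show "act R0 (P k 1) (cunit (U L)) \<subseteq> {(cunit (U L), U L, rb L), (cunit (U L), U L, rc L)}"
    proof
      fix t assume "t \<in> act R0 (P k 1) (cunit (U L))"
      then obtain m0 i r where h: "t = (m0,i,r)" "P k 1 m0 \<noteq> 0" "0 < m0 i" "r \<in> R0" "delta r i \<noteq> 0"
        "cunit (U L) = cplus (msub m0 i) (fst r)" by (rule act_elim)
      have m0: "m0 = cunit (U L)" using supp_P1 h(2) by blast
      have i: "i = U L" using h(3) unfolding m0 by (rule pos_cunit)
      have "cplus (msub m0 i) (fst r) = fst r" using m0 i by (simp add: msub_cunit cplus_zero)
      then have f: "fst r = cunit (U L)" using h(6) by simp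
      have "r = ra L \<or> r = rb L \<or> r = rc L" using delta_UL h i by blast
      moreover have "r \<noteq> ra L"
      proof
        assume "r = ra L"
        then have "fst r Y = 1" using SY[of "L - 1"] by (simp add: fst_rA cplus_def cunit_def)
        then show False using f UY0 by (simp add: cunit_def)
      qed
      ultimately have "r = rb L \<or> r = rc L" by blast
      then show "t \<in> {(cunit (U L), U L, rb L), (cunit (U L), U L, rc L)}" using h(1) m0 i by blast
    qed
    show "{(cunit (U L), U L, rb L), (cunit (U L), U L, rc L)} \<subseteq> act R0 (P k 1) (cunit (U L))"
    proof -
      have a: "P k 1 (cunit (U L)) \<noteq> 0" using P1v kpos mem by auto
      have b: "0 < cunit (U L) (U L)" by (simp add: cunit_def)
      have c: "cunit (U L) = cplus (msub (cunit (U L)) (U L)) (fst (rb L))"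
              "cunit (U L) = cplus (msub (cunit (U L)) (U L)) (fst (rc L))"
        by (simp_all add: msub_cunit cplus_zero fst_rB fst_rC)
      show ?thesis unfolding act_def using a b c mem dB dC by simp
    qed
  qed
  have "P k 2 (cunit (U L)) = TD R0 k (P k 1) (cunit (U L))" by (simp add: numeral_2_eq_2)
  also have "\<dots> = tval k (P k 1) (cunit (U L), U L, rb L) + tval k (P k 1) (cunit (U L), U L, rc L)"
    by (subst TD_act[OF fin_chain finP], subst actE) (simp add: ne)
  also have "\<dots> = - (k (rc L) * (k (rb L) + k (rc L)))"
    using P1v dB dC by (simp add: tval_def cunit_def algebra_simps)
  finally show ?thesis .
qed


lemma P3_eq: "P k 3 = TD R0 k (P k 2)"
  by (simp add: numeral_3_eq_3 numeral_2_eq_2)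

lemma supp_P2_cases:
  assumes "P k 2 m0 \<noteq> 0" "0 < m0 i"
  obtains "m0 = cunit (U L)" "i = U L" | "m0 = Q2" "i = Y" | "m0 = Q2" "i = S (L - 1)"
proof -
  have "m0 = Q2 \<or> m0 = cunit (U L)" using supp_P2 assms(1) by blast
  then show thesis
  proof
    assume m: "m0 = Q2"
    then have "0 < Q2 i" using assms(2) by simp
    then have "i = Y \<or> i = S (L - 1)" by (rule Q2_pos)
    then show thesis
    proof
      assume "i = Y" then show thesis using that(2) m by simp
    next
      assume "i = S (L - 1)" then show thesis using that(3) m by simp
    qed
  next
    assume m: "m0 = cunit (U L)"
    then have "0 < cunit (U L) i" using assms(2) by simp
    then have "i = U L" by (rule pos_cunit)
    then show thesis using that(1) m by simp
  qed
qed

lemma cplus_at: "cplus a b x = a x + b x" by (simp add: cplus_def)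
lemma cunit_at: "cunit a x = (if x = a then 1 else 0)" by (simp add: cunit_def)

definition Tm :: "nat \<Rightarrow> 'sp cplx" where "Tm j = cplus (cunit (S (L - 1))) (cunit (U j))"
definition Tp :: "'sp cplx" where "Tp = cplus (cunit (S (L - 1))) (cplus (cunit Y) (cunit (S 0)))"

lemma SL1Y: "S (L - 1) \<noteq> Y" using SY[of "L - 1"] by simp
lemma S0Y: "S 0 \<noteq> Y" using SY[of 0] by simp

lemma P3_Tm:
  assumes kpos: "\<forall>r\<in>R0. 0 < k r" and j: "1 \<le> j" "j \<le> L"
  shows "P k 3 (Tm j) = k (rc L) * k (ra L) * (k (rb j) + k (rc j))"
proof -
  have UjY: "U j \<noteq> Y" using UY j by blast
  have TY: "Tm j Y = 0" using UjY SL1Y by (simp add: Tm_def cplus_at cunit_at)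
  have Ttot: "tot (Tm j) = 2" by (simp add: Tm_def tot_cplus tot_cunit)
  have ne: "rb j \<noteq> rc j" using rb_ne_rc j by blast
  have mem: "rb j \<in> R0" "rc j \<in> R0" using j unfolding mem_chain by auto
  have SjY: "S (j - 1) \<noteq> Y" "S j \<noteq> Y" using SY j by auto
  have dB: "delta (rb j) Y = 1" using UjY SjY by (simp add: delta_rB)
  have dC: "delta (rc j) Y = 1" using UjY SjY by (simp add: delta_rC)
  have P2v: "P k 2 Q2 = k (rc L) * k (ra L)" by (rule P2_Q2[OF kpos])
  have L1m: "1 \<le> L" "L \<le> L" using L1 by auto
  have memL: "rc L \<in> R0" "ra L \<in> R0" using L1 unfolding mem_chain by auto
  have P2nz: "P k 2 Q2 \<noteq> 0" using P2v kpos memL by auto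
  have actE: "act R0 (P k 2) (Tm j) = {(Q2, Y, rb j), (Q2, Y, rc j)}"
  proof
    show "act R0 (P k 2) (Tm j) \<subseteq> {(Q2, Y, rb j), (Q2, Y, rc j)}"
    proof
      fix t assume "t \<in> act R0 (P k 2) (Tm j)"
      then obtain m0 i r where h: "t = (m0,i,r)" "P k 2 m0 \<noteq> 0" "0 < m0 i" "r \<in> R0" "delta r i \<noteq> 0"
        "Tm j = cplus (msub m0 i) (fst r)" by (rule act_elim)
      from h(2,3) show "t \<in> {(Q2, Y, rb j), (Q2, Y, rc j)}"
      proof (cases rule: supp_P2_cases)
        case 1
        then have "Tm j = fst r" using h(6) by (simp add: msub_cunit cplus_zero)
        with h(4) show ?thesis
        proof (cases rule: fstR0_cases)
          case (1 j') then show ?thesis using TY \<open>Tm j = fst r\<close> by simp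
        next
          case (2 j') then show ?thesis using Ttot \<open>Tm j = fst r\<close> by simp
        qed
      next
        case 2
        then have e: "cplus (cunit (S (L - 1))) (cunit (U j)) = cplus (cunit (S (L - 1))) (fst r)"
          using h(6) by (simp add: msub_Q2_Y Tm_def)
        have f: "fst r = cunit (U j)" using cplus_cancel[OF e] by simp
        from h(4) show ?thesis
        proof (cases rule: fstR0_cases)
          case (1 j') then show ?thesis using f UjY by (simp add: cunit_at)
        next
          case (2 j')
          then have "cunit (U j') = cunit (U j)" using f by simp
          then have "U j' = U j" by (simp only: cunit_inj)
          then have "j' = j" using Uinj 2(1,2) j by blast
          then show ?thesis using 2(3) h(1) \<open>m0 = Q2\<close> \<open>i = Y\<close> by blast
        qed
      next
        case 3
        have "msub m0 i = cunit Y" unfolding 3 by (rule msub_Q2_S)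
        then have "Tm j = cplus (cunit Y) (fst r)" using h(6) by simp
        then have "Tm j Y = 1 + fst r Y" by (simp add: cplus_at cunit_at)
        then show ?thesis using TY by simp
      qed
    qed
    have c: "Tm j = cplus (msub Q2 Y) (fst (rb j))" "Tm j = cplus (msub Q2 Y) (fst (rc j))"
      by (simp_all add: msub_Q2_Y fst_rB fst_rC Tm_def)
    show "{(Q2, Y, rb j), (Q2, Y, rc j)} \<subseteq> act R0 (P k 2) (Tm j)"
      unfolding act_def using P2nz Q2_Y c mem dB dC by simp
  qed
  have "P k 3 (Tm j) = TD R0 k (P k 2) (Tm j)" by (simp only: P3_eq)
  also have "\<dots> = tval k (P k 2) (Q2, Y, rb j) + tval k (P k 2) (Q2, Y, rc j)"
    by (subst TD_act[OF fin_chain finP], subst actE) (simp add: ne)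
  also have "\<dots> = k (rc L) * k (ra L) * (k (rb j) + k (rc j))"
    using P2v dB dC Q2_Y by (simp add: tval_def algebra_simps)
  finally show ?thesis .
qed

lemma P3_Tp:
  assumes kpos: "\<forall>r\<in>R0. 0 < k r"
  shows "P k 3 Tp = - (k (rc L) * k (ra L) * k (ra 1))"
proof -
  have TY: "Tp Y = 1" using SL1Y S0Y by (simp add: Tp_def cplus_at cunit_at)
  have Ttot: "tot Tp = 3" by (simp add: Tp_def tot_cplus tot_cunit)
  have mem: "ra 1 \<in> R0" using L1 unfolding mem_chain by auto
  have U1Y: "U 1 \<noteq> Y" using UY L1 by blast
  have dA: "delta (ra 1) Y = -1" using U1Y S0Y by (simp add: delta_rA)
  have P2v: "P k 2 Q2 = k (rc L) * k (ra L)" by (rule P2_Q2[OF kpos])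
  have memL: "rc L \<in> R0" "ra L \<in> R0" using L1 unfolding mem_chain by auto
  have P2nz: "P k 2 Q2 \<noteq> 0" using P2v kpos memL by auto
  have actE: "act R0 (P k 2) Tp = {(Q2, Y, ra 1)}"
  proof
    show "act R0 (P k 2) Tp \<subseteq> {(Q2, Y, ra 1)}"
    proof
      fix t assume "t \<in> act R0 (P k 2) Tp"
      then obtain m0 i r where h: "t = (m0,i,r)" "P k 2 m0 \<noteq> 0" "0 < m0 i" "r \<in> R0" "delta r i \<noteq> 0"
        "Tp = cplus (msub m0 i) (fst r)" by (rule act_elim)
      from h(2,3) show "t \<in> {(Q2, Y, ra 1)}"
      proof (cases rule: supp_P2_cases)
        case 1
        then have "Tp = fst r" using h(6) by (simp add: msub_cunit cplus_zero)
        with h(4) show ?thesis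
        proof (cases rule: fstR0_cases)
          case (1 j') then show ?thesis using Ttot \<open>Tp = fst r\<close> by simp
        next
          case (2 j') then show ?thesis using Ttot \<open>Tp = fst r\<close> by simp
        qed
      next
        case 2
        then have e: "cplus (cunit (S (L - 1))) (cplus (cunit Y) (cunit (S 0))) = cplus (cunit (S (L - 1))) (fst r)"
          using h(6) by (simp add: msub_Q2_Y Tp_def)
        have f: "fst r = cplus (cunit Y) (cunit (S 0))" using cplus_cancel[OF e] by simp
        from h(4) show ?thesis
        proof (cases rule: fstR0_cases)
          case (1 j')
          then have "cplus (cunit Y) (cunit (S (j' - 1))) = cplus (cunit Y) (cunit (S 0))" using f by simp
          then have "cunit (S (j' - 1)) = cunit (S 0)" by (rule cplus_cancel)
          then have "S (j' - 1) = S 0" by (simp only: cunit_inj)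
          then have "j' - 1 = 0" using Sinj[of "j' - 1" 0] 1(2) by simp
          then have "j' = 1" using 1(1) by simp
          then show ?thesis using 1(3) h(1) \<open>m0 = Q2\<close> \<open>i = Y\<close> by blast
        next
          case (2 j')
          have "tot (fst r) = 2" using f by (simp add: tot_cplus tot_cunit)
          then show ?thesis using 2 by simp
        qed
      next
        case 3
        have "msub m0 i = cunit Y" unfolding 3 by (rule msub_Q2_S)
        then have e: "Tp = cplus (cunit Y) (fst r)" using h(6) by simp
        then have "Tp Y = 1 + fst r Y" by (simp add: cplus_at cunit_at)
        then have fY: "fst r Y = 0" using TY by simp
        have "tot Tp = 1 + tot (fst r)" using e by (simp add: tot_cplus tot_cunit)
        then have ft: "tot (fst r) = 2" using Ttot by simp
        from h(4) show ?thesis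
        proof (cases rule: fstR0_cases)
          case (1 j') then show ?thesis using fY by simp
        next
          case (2 j') then show ?thesis using ft by simp
        qed
      qed
    qed
    have c: "Tp = cplus (msub Q2 Y) (fst (ra 1))"
      by (simp add: msub_Q2_Y fst_rA Tp_def)
    show "{(Q2, Y, ra 1)} \<subseteq> act R0 (P k 2) Tp"
      unfolding act_def using P2nz Q2_Y c mem dA by simp
  qed
  have "P k 3 Tp = TD R0 k (P k 2) Tp" by (simp only: P3_eq)
  also have "\<dots> = tval k (P k 2) (Q2, Y, ra 1)"
    by (subst TD_act[OF fin_chain finP], subst actE) simp
  also have "\<dots> = - (k (rc L) * k (ra L) * k (ra 1))"
    using P2v dA Q2_Y by (simp add: tval_def algebra_simps)
  finally show ?thesis .
qed


definition V0 :: "'sp set" where "V0 = insert Y (S ` {0..L} \<union> U ` {1..L})"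
definition vs :: "'sp cplx \<Rightarrow> bool" where "vs m \<longleftrightarrow> (\<forall>x. x \<notin> V0 \<longrightarrow> m x = 0)"

lemma vs_cplus: "vs a \<Longrightarrow> vs b \<Longrightarrow> vs (cplus a b)" by (simp add: vs_def cplus_def)
lemma vs_cunit: "x \<in> V0 \<Longrightarrow> vs (cunit x)" by (auto simp: vs_def cunit_def)
lemma vs_ymon: "vs (ymon n)" by (auto simp: vs_def ymon_def V0_def)
lemma V0_Y: "Y \<in> V0" by (simp add: V0_def)
lemma V0_S: "j \<le> L \<Longrightarrow> S j \<in> V0" by (simp add: V0_def)
lemma V0_U: "1 \<le> j \<Longrightarrow> j \<le> L \<Longrightarrow> U j \<in> V0" by (simp add: V0_def)

lemma vs_path: "l \<le> 2 * L \<Longrightarrow> vs (path l)"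
  unfolding path_def
proof (intro vs_cplus vs_ymon vs_cunit)
  assume "l \<le> 2 * L"
  then show "i0 l \<in> V0"
    by (cases l rule: parity_cases) (auto simp: i0_def V0_def)
qed

lemma vs_Tm: "1 \<le> j \<Longrightarrow> j \<le> L \<Longrightarrow> vs (Tm j)"
  unfolding Tm_def by (intro vs_cplus vs_cunit V0_S V0_U) auto
lemma vs_Tp: "vs Tp"
  unfolding Tp_def by (intro vs_cplus vs_cunit V0_S V0_Y) auto
lemma vs_UL: "vs (cunit (U L))"
  by (intro vs_cunit V0_U) (use L1 in auto)

theorem ident:
  assumes k1: "\<forall>r\<in>R0. 0 < k1 r" and k2: "\<forall>r\<in>R0. 0 < k2 r"
    and obs: "\<And>l m. 1 \<le> l \<Longrightarrow> l \<le> max 2 (2 * L - 1) \<Longrightarrow> vs m \<Longrightarrow> P k1 l m = P k2 l m"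
    and j: "1 \<le> j" "j \<le> L"
  shows "k1 (ra j) = k2 (ra j) \<and> k1 (rb j) = k2 (rb j) \<and> k1 (rc j) = k2 (rc j)"
proof -
  define D where "D = max 2 (2 * L - 1)"
  have D2L: "D \<le> 2 * L" using L1 by (simp add: D_def)
  have cpeq: "cp k1 l = cp k2 l" if "l \<le> D" for l
  proof (cases "l = 0")
    case True then show ?thesis by simp
  next
    case False
    have l2: "l \<le> 2 * L" using that D2L by simp
    have "P k1 l (path l) = P k2 l (path l)" using obs[of l "path l"] False that vs_path[OF l2]
      by (simp add: D_def)
    then show ?thesis using inv[OF k1 l2] inv[OF k2 l2] by simp
  qed
  have keq: "k1 (r0 l) = k2 (r0 l)" if "Suc l \<le> D" for l
  proof -
    have l: "l \<le> 2 * L" using that D2L by simp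
    have "cp k1 l * k1 (r0 l) = cp k2 l * k2 (r0 l)" using cpeq[OF that] by simp
    moreover have "cp k1 l = cp k2 l" "cp k1 l \<noteq> 0" using cpeq[of l] that cp_pos[OF k1 l] by auto
    ultimately show ?thesis by simp
  qed
  have memj: "ra j \<in> R0" "rb j \<in> R0" "rc j \<in> R0" using j unfolding mem_chain by auto
  have memL: "ra L \<in> R0" "rb L \<in> R0" "rc L \<in> R0" using L1 unfolding mem_chain by auto
  have ceq: "k1 (rc i) = k2 (rc i)" if "1 \<le> i" "i \<le> L" for i
  proof -
    have "r0 (2 * (L - i)) = rc i" using that by (simp add: r0_def)
    moreover have "Suc (2 * (L - i)) \<le> D" using that by (simp add: D_def)
    ultimately show ?thesis using keq by metis
  qed
  have aeq_path: "k1 (ra i) = k2 (ra i)" if "1 \<le> i" "i \<le> L" "2 * (L - i) + 2 \<le> D" for i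
  proof -
    have "r0 (2 * (L - i) + 1) = ra i" using that(1,2) by (simp add: r0_def)
    moreover have "Suc (2 * (L - i) + 1) \<le> D" using that by simp
    ultimately show ?thesis using keq by metis
  qed
  have aL: "k1 (ra L) = k2 (ra L)"
    using aeq_path[of L] L1 by (simp add: D_def)
  have cL: "k1 (rc L) = k2 (rc L)" using ceq[of L] L1 by simp
  have aeq: "k1 (ra j) = k2 (ra j)"
  proof (cases "2 * (L - j) + 2 \<le> D")
    case True then show ?thesis using aeq_path j by blast
  next
    case False
    then have j1: "j = 1" and L2: "2 \<le> L" using j by (auto simp: D_def)
    have "3 \<le> D" using L2 by (simp add: D_def)
    then have "P k1 3 Tp = P k2 3 Tp" using obs[of 3 Tp] vs_Tp by (simp add: D_def)
    then have "k1 (rc L) * k1 (ra L) * k1 (ra 1) = k2 (rc L) * k2 (ra L) * k2 (ra 1)"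
      using P3_Tp[OF k1] P3_Tp[OF k2] by simp
    moreover have "k1 (rc L) * k1 (ra L) \<noteq> 0" using k1 memL by auto
    ultimately show ?thesis using aL cL j1 by simp
  qed
  have beq: "k1 (rb j) = k2 (rb j)"
  proof (cases "L = 1")
    case True
    then have jL: "j = L" using j by simp
    have "P k1 2 (cunit (U L)) = P k2 2 (cunit (U L))" using obs[of 2 "cunit (U L)"] vs_UL
      by (simp add: D_def)
    then have "k1 (rc L) * (k1 (rb L) + k1 (rc L)) = k2 (rc L) * (k2 (rb L) + k2 (rc L))"
      using P2_UL[OF k1] P2_UL[OF k2] by simp
    moreover have "k1 (rc L) \<noteq> 0" using k1 memL by auto
    ultimately show ?thesis using cL jL by simp
  next
    case False
    then have "3 \<le> D" using L1 by (simp add: D_def)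
    then have "P k1 3 (Tm j) = P k2 3 (Tm j)" using obs[of 3 "Tm j"] vs_Tm[OF j] by (simp add: D_def)
    then have "k1 (rc L) * k1 (ra L) * (k1 (rb j) + k1 (rc j)) = k2 (rc L) * k2 (ra L) * (k2 (rb j) + k2 (rc j))"
      using P3_Tm[OF k1 j] P3_Tm[OF k2 j] by simp
    moreover have "k1 (rc L) * k1 (ra L) \<noteq> 0" using k1 memL by auto
    ultimately show ?thesis using aL cL ceq[OF j] by simp
  qed
  show ?thesis using aeq beq ceq[OF j] by blast
qed

end


lemma obs_coeff:
  assumes R: "finite R"
    and e: "total_deriv_iter R k1 l (\<lambda>x. x $ i) = total_deriv_iter R k2 l (\<lambda>x. x $ i)"
  shows "(TD R k1 ^^ l) (Xv i) m = (TD R k2 ^^ l) (Xv i) m"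
proof -
  have a: "total_deriv_iter R k l (\<lambda>x. x $ i) = peval ((TD R k ^^ l) (Xv i))" for k
    using iter_sound[OF R fin_Xv[of i], where k=k and l=l] by (simp add: total_deriv_iter_def peval_Xv)
  have f: "finite (supp ((TD R k ^^ l) (Xv i)))" for k
    using iter_sound[OF R fin_Xv[of i], where k=k and l=l] by blast
  have "peval ((TD R k1 ^^ l) (Xv i)) = peval ((TD R k2 ^^ l) (Xv i))" using e a by simp
  then show ?thesis by (rule coeff_eq[OF f f])
qed

theorem mainTheorem1:
  fixes R :: "('sp::finite) reaction set"
    and I :: "'c set" and L :: "'c \<Rightarrow> nat" and Y :: "'c \<Rightarrow> 'sp"
    and S U :: "'c \<Rightarrow> nat \<Rightarrow> 'sp" and c0 :: 'c
  assumes "H1 R I L Y S U"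
    and "H2 R I L Y S U"
    and "c0 \<in> I"
  shows "identifiable R
           (\<lambda>k. map (\<lambda>j. (k (rA (Y c0) (S c0) (U c0) j),
                          k (rB (Y c0) (S c0) (U c0) j),
                          k (rC (Y c0) (S c0) (U c0) j))) [1..<L c0 + 1])
           {S c0 (L c0)}
           (max 2 (2 * L c0 - 1))"
proof -
  have c0: "c0 \<in> I" by fact
  note H1' = assms(1)[unfolded H1_def]
  have finI: "finite I" using H1' by (rule conjunct1)
  have Lpos: "\<forall>c\<in>I. L c \<ge> 1" using H1'[THEN conjunct2, THEN conjunct1] .
  have Req: "R = (\<Union>c\<in>I. chain_reactions (Y c) (S c) (U c) (L c))"
    using H1'[THEN conjunct2, THEN conjunct2, THEN conjunct1] .
  have Uinj: "inj_on (\<lambda>(c, j). U c j) {(c, j). c \<in> I \<and> j \<in> {1..L c}}"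
    using H1'[THEN conjunct2, THEN conjunct2, THEN conjunct2, THEN conjunct1] .
  have Uoth: "\<forall>c\<in>I. \<forall>j\<in>{1..L c}. \<forall>c'\<in>I. U c j \<noteq> Y c' \<and> (\<forall>j'\<in>{0..L c'}. U c j \<noteq> S c' j')"
    using H1'[THEN conjunct2, THEN conjunct2, THEN conjunct2, THEN conjunct2, THEN conjunct1] .
  have Sinj: "\<forall>c\<in>I. inj_on (S c) {0..L c}"
    using H1'[THEN conjunct2, THEN conjunct2, THEN conjunct2, THEN conjunct2, THEN conjunct2, THEN conjunct1] .
  have uniq: "\<forall>c\<in>I. \<forall>c'\<in>I. c \<noteq> c' \<longrightarrow> (\<forall>j\<in>{0..L c}. \<forall>j'\<in>{0..L c'}.
        cplus (cunit (Y c)) (cunit (S c j)) \<noteq> cplus (cunit (Y c')) (cunit (S c' j')))"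
    using H1'[THEN conjunct2, THEN conjunct2, THEN conjunct2, THEN conjunct2, THEN conjunct2, THEN conjunct2] .
  from assms(2) obtain Pc :: "'sp \<Rightarrow> nat" where
    Pc: "\<forall>c\<in>I. \<exists>\<alpha>\<ge>1. (\<forall>j\<in>{0..L c}. Pc (S c j) = \<alpha>) \<and> Pc (Y c) \<noteq> \<alpha>"
    unfolding H2_def by blast
  interpret ch: chain "Y c0" "S c0" "U c0" "L c0"
  proof
    show "1 \<le> L c0" using Lpos c0 by blast
    show "S c0 j \<noteq> Y c0" if "j \<le> L c0" for j
    proof -
      obtain \<alpha> where a: "\<forall>j\<in>{0..L c0}. Pc (S c0 j) = \<alpha>" "Pc (Y c0) \<noteq> \<alpha>" using Pc c0 by blast
      have "Pc (S c0 j) = \<alpha>" using a(1) that by simp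
      then show ?thesis using a(2) by metis
    qed
    show "U c0 j \<noteq> Y c0" if "1 \<le> j" "j \<le> L c0" for j using Uoth c0 that by auto
    show "U c0 j' \<noteq> S c0 j" if "j \<le> L c0" "1 \<le> j'" "j' \<le> L c0" for j j'
      using Uoth c0 that by auto
    show "i = j" if "i \<le> L c0" "j \<le> L c0" "S c0 i = S c0 j" for i j
    proof -
      have "inj_on (S c0) {0..L c0}" using Sinj c0 by blast
      then show ?thesis using that by (auto dest: inj_onD)
    qed
    show "i = j" if "1 \<le> i" "i \<le> L c0" "1 \<le> j" "j \<le> L c0" "U c0 i = U c0 j" for i j
      using inj_onD[OF Uinj, of "(c0, i)" "(c0, j)"] c0 that by auto
  qed
  let ?R0 = "chain_reactions (Y c0) (S c0) (U c0) (L c0)"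
  have finR: "finite R" unfolding Req using finI by (auto simp: fin_chain)
  have sub: "?R0 \<subseteq> R" unfolding Req using c0 by blast
  have inV: "i \<in> ch.V0" if "r \<in> ?R0" "delta r i \<noteq> 0" for r i
    using that
  proof (cases rule: ch.delta_nz_cases)
    case (1 j) then show ?thesis by (auto simp: ch.V0_def)
  next
    case (2 j) then show ?thesis by (auto simp: ch.V0_def)
  next
    case (3 j) then show ?thesis by (auto simp: ch.V0_def)
  qed
  have out: "\<exists>x. 0 < fst r x \<and> x \<notin> ch.V0" if r: "r \<in> R" "r \<notin> ?R0" for r
  proof -
    from r(1) obtain c' where c': "c' \<in> I" "r \<in> chain_reactions (Y c') (S c') (U c') (L c')"
      unfolding Req by blast
    have cc: "c' \<noteq> c0" using c' r(2) by blast
    from c'(2) obtain j where j: "1 \<le> j" "j \<le> L c'"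
      "r = rA (Y c') (S c') (U c') j \<or> r = rB (Y c') (S c') (U c') j \<or> r = rC (Y c') (S c') (U c') j"
      unfolding mem_chain by blast
    have Unot: "U c' j \<notin> ch.V0"
    proof
      assume "U c' j \<in> ch.V0"
      then consider "U c' j = Y c0" | a where "a \<le> L c0" "U c' j = S c0 a"
        | b where "1 \<le> b" "b \<le> L c0" "U c' j = U c0 b"
        unfolding ch.V0_def by auto
      then show False
      proof cases
        case 1 then show False using Uoth c' j c0 by auto
      next
        case 2 then show False using Uoth c' j c0 by auto
      next
        case 3
        then have "(c', j) = (c0, b)" using inj_onD[OF Uinj, of "(c', j)" "(c0, b)"] c' j c0 by auto
        then show False using cc by simp
      qed
    qed
    show ?thesis
    proof (cases "r = rA (Y c') (S c') (U c') j")
      case False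
      then have "fst r = cunit (U c' j)" using j(3) by (auto simp: fst_rB fst_rC)
      then show ?thesis using Unot by (intro exI[of _ "U c' j"]) (simp add: cunit_def)
    next
      case True
      let ?y = "Y c'" and ?z = "S c' (j - 1)"
      have fy: "0 < fst r ?y" and fz: "0 < fst r ?z" using True by (simp_all add: fst_rA cplus_def cunit_def)
      obtain \<alpha>' where a': "\<forall>jj\<in>{0..L c'}. Pc (S c' jj) = \<alpha>'" "Pc (Y c') \<noteq> \<alpha>'" using Pc c' by blast
      obtain \<alpha>0 where a0: "\<forall>jj\<in>{0..L c0}. Pc (S c0 jj) = \<alpha>0" "Pc (Y c0) \<noteq> \<alpha>0" using Pc c0 by blast
      have Pz: "Pc ?z = \<alpha>'" using a' j by auto
      have "\<not> (?y \<in> ch.V0 \<and> ?z \<in> ch.V0)"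
      proof
        assume both: "?y \<in> ch.V0 \<and> ?z \<in> ch.V0"
        have yU: "?y \<notin> U c0 ` {1..L c0}" using Uoth c0 c' by fastforce
        have zU: "?z \<notin> U c0 ` {1..L c0}"
        proof
          assume "?z \<in> U c0 ` {1..L c0}"
          then obtain b where b: "b \<in> {1..L c0}" "?z = U c0 b" by blast
          have "j - 1 \<in> {0..L c'}" using j by auto
          then have "U c0 b \<noteq> S c' (j - 1)" using Uoth c0 c'(1) b(1) by blast
          then show False using b(2) by simp
        qed
        from both yU have y: "?y = Y c0 \<or> (\<exists>a\<in>{0..L c0}. ?y = S c0 a)" unfolding ch.V0_def by blast
        from both zU have z: "?z = Y c0 \<or> (\<exists>a\<in>{0..L c0}. ?z = S c0 a)" unfolding ch.V0_def by blast
        have jz: "j - 1 \<in> {0..L c'}" using j by auto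
        show False
        proof (cases "?y = Y c0")
          case yY: True
          show False
          proof (cases "?z = Y c0")
            case True then show False using yY Pz a'(2) by simp
          next
            case False
            then obtain a where a: "a \<in> {0..L c0}" "?z = S c0 a" using z by blast
            have "cplus (cunit (Y c')) (cunit (S c' (j - 1))) = cplus (cunit (Y c0)) (cunit (S c0 a))"
              using yY a by simp
            then show False using uniq c' c0 cc jz a(1) by blast
          qed
        next
          case False
          then obtain a where a: "a \<in> {0..L c0}" "?y = S c0 a" using y by blast
          show False
          proof (cases "?z = Y c0")
            case True
            have "cplus (cunit (Y c')) (cunit (S c' (j - 1))) = cplus (cunit (Y c0)) (cunit (S c0 a))"
              using True a ch.cplus_comm by metis
            then show False using uniq c' c0 cc jz a(1) by blast
          next
            case False
            then obtain b where b: "b \<in> {0..L c0}" "?z = S c0 b" using z by blast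
            have "Pc ?y = \<alpha>0" "Pc ?z = \<alpha>0" using a b a0 by auto
            then show False using Pz a'(2) by simp
          qed
        qed
      qed
      then show ?thesis using fy fz by blast
    qed
  qed
  show ?thesis
    unfolding identifiable_def
  proof (intro allI impI)
    fix k1 k2 :: "'sp reaction \<Rightarrow> real"
    assume h: "(\<forall>r\<in>R. 0 < k1 r) \<and> (\<forall>r\<in>R. 0 < k2 r) \<and>
        (\<forall>l\<in>{1..max 2 (2 * L c0 - 1)}. \<forall>i\<in>{S c0 (L c0)}.
          total_deriv_iter R k1 l (\<lambda>x. x $ i) = total_deriv_iter R k2 l (\<lambda>x. x $ i))"
    have k1: "\<forall>r\<in>?R0. 0 < k1 r" and k2: "\<forall>r\<in>?R0. 0 < k2 r" using h sub by blast+
    have obs: "ch.P k1 l m = ch.P k2 l m"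
      if l: "1 \<le> l" "l \<le> max 2 (2 * L c0 - 1)" and m: "ch.vs m" for l m
    proof -
      have e: "total_deriv_iter R k1 l (\<lambda>x. x $ S c0 (L c0)) = total_deriv_iter R k2 l (\<lambda>x. x $ S c0 (L c0))"
        using h l by auto
      have m': "\<forall>x. x \<notin> ch.V0 \<longrightarrow> m x = 0" using m by (simp add: ch.vs_def)
      have "(TD R k1 ^^ l) (Xv (S c0 (L c0))) m = (TD R k2 ^^ l) (Xv (S c0 (L c0))) m"
        by (rule obs_coeff[OF finR e])
      moreover have "(TD R k ^^ l) (Xv (S c0 (L c0))) m = (TD ?R0 k ^^ l) (Xv (S c0 (L c0))) m" for k
      proof -
        have "\<forall>m'. (\<forall>x. x \<notin> ch.V0 \<longrightarrow> m' x = 0) \<longrightarrow>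
            (TD R k ^^ l) (Xv (S c0 (L c0))) m' = (TD ?R0 k ^^ l) (Xv (S c0 (L c0))) m'"
          by (rule proj_iter[OF finR sub]) (fact out, fact inV, rule fin_Xv)
        then show ?thesis using m' by blast
      qed
      ultimately show ?thesis by simp
    qed
    show "map (\<lambda>j. (k1 (rA (Y c0) (S c0) (U c0) j), k1 (rB (Y c0) (S c0) (U c0) j), k1 (rC (Y c0) (S c0) (U c0) j))) [1..<L c0 + 1] =
          map (\<lambda>j. (k2 (rA (Y c0) (S c0) (U c0) j), k2 (rB (Y c0) (S c0) (U c0) j), k2 (rC (Y c0) (S c0) (U c0) j))) [1..<L c0 + 1]"
      using ch.ident[OF k1 k2 obs] by (intro map_cong refl) auto
  qed
qed

end
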